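(* In the setting described in the context, for each $h>0$ there exists $\alpha_{\mathrm{MQ}}(h)>0$ such that \[ \inf_{q_h\in Q_L\setminus\{0\}}\ \sup_{v_h\in V_h\setminus\{0\}}\frac{(v_h,q_h)_{0,I}}{\|v_h\|_{0,I}\,\|q_h\|_{0,I}}\ge\alpha_{\mathrm{MQ}}(h). \]
   Context: Let $I$ be a bounded interval and $(\cdot,\cdot)_{0,I}$, $\|\cdot\|_{0,I}$ the $L^2(I)$ inner product and norm. Let $\mathcal T_h$ be a uniform mesh of $I$ with mesh size $h$, and let $\mathcal S^p(\mathcal T_h)$ denote the univariate B-spline space of degree $p\ge2$ on the open knot vector whose interior knots are the interior mesh points of $\mathcal T_h$ (each with multiplicity one). Set $V_h:=\mathcal S^p(\mathcal T_h)\cap H^1_0(I)$. Dyadic coarsening: $\mathcal M_h^{(0)}=\mathcal T_h$ and for $k=1,\dots,L$ ($L\ge1$) the mesh $\mathcal M_h^{(k)}$ is obtained from $\mathcal M_h^{(k-1)}$ by removing every second interior knot, so that $\mathcal M_h^{(k)}$ has mesh size $2^kh$ and each element of $\mathcal M_h^{(L)}$ is the union of exactly $2^L$ elements of $\mathcal T_h$. Let $Q_L:=\mathcal S^{p-1}(\mathcal M_h^{(L)})$ be the univariate B-spline space of degree $p-1$ on the open knot vector associated with $\mathcal M_h^{(L)}$. *)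

theory Defs
  imports "HOL-Analysis.Analysis" "HOL-Computational_Algebra.Polynomial"
begin

text \<open>The univariate spline space of degree p on the open knot vector
  whose interior knots are the interior mesh points, each with multiplicity one, is the
  space of functions that are polynomials of degree at most p on each (closed) element
  and are C^(p-1) across every interior knot (Curry-Schoenberg).  Only the values on the
  interval matter.\<close>

definition mesh_pt :: "real \<Rightarrow> real \<Rightarrow> nat \<Rightarrow> real" where
  "mesh_pt a H i = a + real i * H"

definition spline_space :: "real \<Rightarrow> real \<Rightarrow> nat \<Rightarrow> nat \<Rightarrow> (real \<Rightarrow> real) set" where
  "spline_space a H M p =
    {f. \<exists>P :: nat \<Rightarrow> real poly.
        (\<forall>i<M. degree (P i) \<le> p \<and>
               (\<forall>x \<in> {mesh_pt a H i .. mesh_pt a H (Suc i)}. f x = poly (P i) x)) \<and>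
        (\<forall>i. Suc i < M \<longrightarrow>
             (\<forall>k<p. poly ((pderiv ^^ k) (P i)) (mesh_pt a H (Suc i)) =
                    poly ((pderiv ^^ k) (P (Suc i))) (mesh_pt a H (Suc i))))}"

definition l2_inner :: "real \<Rightarrow> real \<Rightarrow> (real \<Rightarrow> real) \<Rightarrow> (real \<Rightarrow> real) \<Rightarrow> real" where
  "l2_inner a b f g = integral {a..b} (\<lambda>x. f x * g x)"

definition l2_norm :: "real \<Rightarrow> real \<Rightarrow> (real \<Rightarrow> real) \<Rightarrow> real" where
  "l2_norm a b f = sqrt (l2_inner a b f f)"

text \<open>A function is the zero element of a space of functions on I iff it vanishes on I.\<close>
definition nonzero_on :: "real \<Rightarrow> real \<Rightarrow> (real \<Rightarrow> real) \<Rightarrow> bool" where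
  "nonzero_on a b f \<longleftrightarrow> (\<exists>x\<in>{a..b}. f x \<noteq> 0)"

text \<open>V_h = S^p(T_h) \<inter> H^1_0(I): fine mesh with N elements, h = (b-a)/N.
  (Elements of S^p, p \<ge> 1, are continuous piecewise polynomials, hence in H^1(I);
  membership in H^1_0 means vanishing at the endpoints.)\<close>
definition V_h :: "real \<Rightarrow> real \<Rightarrow> nat \<Rightarrow> nat \<Rightarrow> (real \<Rightarrow> real) set" where
  "V_h a b N p = spline_space a ((b - a) / real N) N p \<inter> {f. f a = 0 \<and> f b = 0}"

text \<open>M_h^(k): obtained from T_h by removing every second interior knot k times; for
  2^L dividing N this is the uniform mesh with N div 2^k elements of size 2^k h.\<close>
definition coarse_mesh_size :: "real \<Rightarrow> real \<Rightarrow> nat \<Rightarrow> nat \<Rightarrow> real" where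
  "coarse_mesh_size a b N k = 2 ^ k * ((b - a) / real N)"

definition Q_L :: "real \<Rightarrow> real \<Rightarrow> nat \<Rightarrow> nat \<Rightarrow> nat \<Rightarrow> (real \<Rightarrow> real) set" where
  "Q_L a b N p L = spline_space a (coarse_mesh_size a b N L) (N div 2 ^ L) (p - 1)"

definition inf_sup_const :: "(real \<Rightarrow> real) set \<Rightarrow> (real \<Rightarrow> real) set \<Rightarrow> real \<Rightarrow> real \<Rightarrow> real" where
  "inf_sup_const V Q a b =
     Inf ((\<lambda>q. Sup ((\<lambda>v. l2_inner a b v q / (l2_norm a b v * l2_norm a b q))
                      ` {v \<in> V. nonzero_on a b v}))
          ` {q \<in> Q. nonzero_on a b q})"

end

theory Submission
  imports Defs
begin

lemma mesh_cover:
  assumes H: "H > 0" and M: "M \<ge> 1" and x: "x \<in> {a..a + real M * H}"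
  shows "\<exists>k<M. x \<in> {mesh_pt a H k .. mesh_pt a H (Suc k)}"
proof -
  define k where "k = min (M - 1) (nat \<lfloor>(x - a) / H\<rfloor>)"
  have x0: "(x - a) / H \<ge> 0" using x H by auto
  have "real (nat \<lfloor>(x - a) / H\<rfloor>) \<le> (x - a) / H" using x0 by linarith
  hence "real k \<le> (x - a) / H" unfolding k_def by (simp add: min_def)
  hence lo: "a + real k * H \<le> x" using H by (simp add: field_simps)
  have "(x - a) / H \<le> real k + 1"
  proof (cases "nat \<lfloor>(x - a) / H\<rfloor> \<le> M - 1")
    case True
    hence "k = nat \<lfloor>(x - a) / H\<rfloor>" unfolding k_def by simp
    thus ?thesis using x0 by linarith
  next
    case False
    hence "k = M - 1" unfolding k_def by simp
    moreover have "(x - a) / H \<le> real M" using x H by (simp add: field_simps)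
    ultimately show ?thesis using M by (simp add: of_nat_diff)
  qed
  hence hi: "x \<le> a + (real k + 1) * H" using H by (simp add: field_simps)
  have "k < M" unfolding k_def using M by simp
  thus ?thesis using lo hi unfolding mesh_pt_def by (intro exI[of _ k]) (auto simp: algebra_simps)
qed

lemma mesh_union:
  assumes H: "H > 0" and M: "M \<ge> 1"
  shows "{a..a + real M * H} = (\<Union>k\<in>{..<M}. {mesh_pt a H k .. mesh_pt a H (Suc k)})"
proof
  show "{a..a + real M * H} \<subseteq> (\<Union>k\<in>{..<M}. {mesh_pt a H k .. mesh_pt a H (Suc k)})"
    using mesh_cover[OF H M] by blast
  show "(\<Union>k\<in>{..<M}. {mesh_pt a H k .. mesh_pt a H (Suc k)}) \<subseteq> {a..a + real M * H}"
  proof (rule subsetI)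
    fix x assume "x \<in> (\<Union>k\<in>{..<M}. {mesh_pt a H k .. mesh_pt a H (Suc k)})"
    then obtain k where k: "k \<in> {..<M}" and x: "x \<in> {mesh_pt a H k .. mesh_pt a H (Suc k)}" by blast
    have "real (Suc k) \<le> real M" using k by simp
    hence A: "real (Suc k) * H \<le> real M * H" using H by (intro mult_right_mono) auto
    have B: "a \<le> mesh_pt a H k" using H unfolding mesh_pt_def by simp
    have C: "a \<le> x" using B x by auto
    show "x \<in> {a..a + real M * H}" using x A C unfolding mesh_pt_def
      by (auto simp: algebra_simps)
  qed
qed

lemma spline_continuous:
  assumes H: "H > 0" and M: "M \<ge> 1" and f: "f \<in> spline_space a H M p"
  shows "continuous_on {a..a + real M * H} f"
proof -
  obtain P where P: "\<forall>i<M. degree (P i) \<le> p \<and>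
      (\<forall>x \<in> {mesh_pt a H i .. mesh_pt a H (Suc i)}. f x = poly (P i) x)"
    using f unfolding spline_space_def by blast
  have "continuous_on (\<Union>k\<in>{..<M}. {mesh_pt a H k .. mesh_pt a H (Suc k)}) f"
  proof (rule continuous_on_closed_Union)
    fix k assume "k \<in> {..<M}"
    hence "\<forall>x \<in> {mesh_pt a H k .. mesh_pt a H (Suc k)}. f x = poly (P k) x" using P by auto
    thus "continuous_on {mesh_pt a H k .. mesh_pt a H (Suc k)} f"
      by (subst continuous_on_cong[OF refl]) (auto intro: continuous_intros)
  qed auto
  thus ?thesis using mesh_union[OF H M] by simp
qed

lemma integral_split_mesh:
  fixes f :: "real \<Rightarrow> real"
  assumes H: "H > 0" and f: "f integrable_on {a..a + real M * H}"
  shows "integral {a..a + real M * H} f = (\<Sum>k<M. integral {mesh_pt a H k .. mesh_pt a H (Suc k)} f)"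
  using f
proof (induction M)
  case 0 thus ?case by simp
next
  case (Suc M)
  have le: "a + real M * H \<le> a + real (Suc M) * H" using H by (simp add: algebra_simps)
  have le0: "a \<le> a + real M * H" using H by simp
  have "f integrable_on {a..a + real M * H}"
    using integrable_on_subinterval[OF Suc.prems] le by auto
  hence IH: "integral {a..a + real M * H} f = (\<Sum>k<M. integral {mesh_pt a H k .. mesh_pt a H (Suc k)} f)"
    using Suc.IH by simp
  have "integral {a..a + real M * H} f + integral {a + real M * H..a + real (Suc M) * H} f
        = integral {a..a + real (Suc M) * H} f"
    by (rule Henstock_Kurzweil_Integration.integral_combine[OF le0 le Suc.prems])
  moreover have "mesh_pt a H M = a + real M * H" "mesh_pt a H (Suc M) = a + real (Suc M) * H"
    unfolding mesh_pt_def by auto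
  ultimately show ?case using IH by simp
qed

lemma integral_pos_point:
  fixes g :: "real \<Rightarrow> real"
  assumes st: "s < t" and gi: "(g has_integral I) {s..t}" and gc: "continuous_on {s..t} g"
    and I: "I > 0"
  shows "\<exists>w\<in>{s<..<t}. g w > 0"
proof (rule ccontr)
  assume "\<not> ?thesis"
  hence le: "\<forall>w\<in>{s<..<t}. g w \<le> 0" by force
  have cl: "closure {s<..<t} = {s..t}" using st by simp
  have "\<forall>w\<in>{s..t}. g w \<le> 0"
  proof
    fix w assume "w \<in> {s..t}"
    thus "g w \<le> 0"
      using continuous_le_on_closure[where S="{s<..<t}" and f=g and a=0 and x=w] gc le cl by auto
  qed
  hence "I \<le> 0" using has_integral_le[OF gi has_integral_0] by auto
  thus False using I by simp
qed

lemma integral_neg_point: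
  fixes g :: "real \<Rightarrow> real"
  assumes st: "s < t" and gi: "(g has_integral I) {s..t}" and gc: "continuous_on {s..t} g"
    and I: "I < 0"
  shows "\<exists>w\<in>{s<..<t}. g w < 0"
proof -
  have "((\<lambda>x. - g x) has_integral - I) {s..t}" using gi by (rule has_integral_neg)
  moreover have "continuous_on {s..t} (\<lambda>x. - g x)" using gc by (intro continuous_intros)
  ultimately obtain w where "w\<in>{s<..<t}" "- g w > 0" using integral_pos_point[OF st] I by force
  thus ?thesis by auto
qed

lemma quad_discr:
  fixes A B C :: real
  assumes q: "\<And>t. 0 \<le> A + 2 * t * B + t^2 * C" and C0: "C \<ge> 0"
  shows "B^2 \<le> A * C"
proof (cases "C = 0")
  case True
  show ?thesis
  proof (rule ccontr)
    assume "\<not> ?thesis"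
    hence "B \<noteq> 0" using True by auto
    have "0 \<le> A + 2 * (- (A + 1) / (2 * B)) * B + (- (A + 1) / (2 * B))^2 * C" by (rule q)
    also have "\<dots> = -1" using \<open>B \<noteq> 0\<close> True by (simp add: field_simps)
    finally show False by simp
  qed
next
  case False
  hence Cp: "C > 0" using C0 by simp
  have "0 \<le> A + 2 * (- B / C) * B + (- B / C)^2 * C" by (rule q)
  also have "\<dots> = A - B^2 / C" using Cp by (simp add: field_simps power2_eq_square)
  finally have "B^2 / C \<le> A" by simp
  thus ?thesis using Cp by (simp add: field_simps)
qed

lemma int_cmul: fixes f :: "real \<Rightarrow> real"
  shows "f integrable_on S \<Longrightarrow> (\<lambda>x. c * f x) integrable_on S"
  using integrable_on_cmult_left[of f S c] by simp

lemma cauchy_schwarz_integral: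
  fixes f g :: "real \<Rightarrow> real"
  assumes f: "continuous_on {a..b} f" and g: "continuous_on {a..b} g"
  shows "\<bar>integral {a..b} (\<lambda>x. f x * g x)\<bar>
        \<le> sqrt (integral {a..b} (\<lambda>x. f x * f x)) * sqrt (integral {a..b} (\<lambda>x. g x * g x))"
proof -
  define A where "A = integral {a..b} (\<lambda>x. f x * f x)"
  define B where "B = integral {a..b} (\<lambda>x. f x * g x)"
  define C where "C = integral {a..b} (\<lambda>x. g x * g x)"
  have iff: "(\<lambda>x. f x * f x) integrable_on {a..b}" using f by (intro integrable_continuous_interval continuous_intros)
  have ifg: "(\<lambda>x. f x * g x) integrable_on {a..b}" using f g by (intro integrable_continuous_interval continuous_intros)
  have igg: "(\<lambda>x. g x * g x) integrable_on {a..b}" using g by (intro integrable_continuous_interval continuous_intros)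
  have q: "0 \<le> A + 2 * t * B + t^2 * C" for t
  proof -
    have "0 \<le> integral {a..b} (\<lambda>x. (f x + t * g x) * (f x + t * g x))"
      by (rule integral_nonneg) (auto intro!: integrable_continuous_interval continuous_intros f g)
    also have "(\<lambda>x. (f x + t * g x) * (f x + t * g x)) = (\<lambda>x. f x * f x + (2 * t) * (f x * g x) + t^2 * (g x * g x))"
      by (auto simp: algebra_simps power2_eq_square)
    also have "integral {a..b} \<dots> = integral {a..b} (\<lambda>x. f x * f x + (2 * t) * (f x * g x)) + integral {a..b} (\<lambda>x. t^2 * (g x * g x))"
      by (rule integral_add) (use iff ifg igg in \<open>auto intro: integrable_add int_cmul\<close>)
    also have "\<dots> = A + 2 * t * B + t^2 * C"
      unfolding A_def B_def C_def
      by (subst integral_add) (use iff ifg igg in \<open>auto intro: integrable_add int_cmul\<close>)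
    finally show ?thesis .
  qed
  have "C \<ge> 0" unfolding C_def by (rule integral_nonneg) (use igg in auto)
  hence "B^2 \<le> A * C" by (rule quad_discr[OF q])
  hence "\<bar>B\<bar> \<le> sqrt (A * C)" using real_le_rsqrt[of "\<bar>B\<bar>" "A * C"] by simp
  thus ?thesis unfolding A_def B_def C_def by (simp add: real_sqrt_mult)
qed

definition Dk :: "real \<Rightarrow> nat \<Rightarrow> (real \<Rightarrow> real) \<Rightarrow> real \<Rightarrow> real" where
  "Dk a k g t = integral {a..t} (\<lambda>x. (t - x)^k * g x)"

lemma Dk_Suc:
  assumes g: "continuous_on {a..b} g" and t: "t \<in> {a..b}"
  shows "Dk a (Suc k) g t = t * Dk a k g t - Dk a k (\<lambda>x. x * g x) t"
proof -
  have gc: "continuous_on {a..t} g" by (rule continuous_on_subset[OF g]) (use t in auto)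
  have i1: "(\<lambda>x. (t - x)^k * g x) integrable_on {a..t}"
    using gc by (intro integrable_continuous_interval continuous_intros)
  have i2: "(\<lambda>x. (t - x)^k * (x * g x)) integrable_on {a..t}"
    using gc by (intro integrable_continuous_interval continuous_intros)
  have "(\<lambda>x. (t - x)^(Suc k) * g x) = (\<lambda>x. t * ((t - x)^k * g x) - (t - x)^k * (x * g x))"
    by (auto simp: algebra_simps)
  hence "Dk a (Suc k) g t = integral {a..t} (\<lambda>x. t * ((t - x)^k * g x) - (t - x)^k * (x * g x))"
    unfolding Dk_def by simp
  also have "\<dots> = t * integral {a..t} (\<lambda>x. (t - x)^k * g x) - integral {a..t} (\<lambda>x. (t - x)^k * (x * g x))"
    by (subst integral_diff) (use i1 i2 in \<open>auto intro: int_cmul\<close>)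
  finally show ?thesis unfolding Dk_def .
qed

lemma Dk0_deriv:
  assumes g: "continuous_on {a..b} g" and t: "t \<in> {a..b}"
  shows "(Dk a 0 g has_real_derivative g t) (at t within {a..b})"
  unfolding Dk_def using integral_has_real_derivative[OF g t] by simp

lemma Dk_deriv:
  assumes g: "continuous_on {a..b} g" and t: "t \<in> {a..b}"
  shows "(Dk a (Suc k) g has_real_derivative (real (Suc k) * Dk a k g t)) (at t within {a..b})"
  using g t
proof (induction k arbitrary: g t)
  case 0
  have g2: "continuous_on {a..b} (\<lambda>x. x * g x)" using 0 by (intro continuous_intros)
  have eq: "\<forall>s\<in>{a..b}. Dk a (Suc 0) g s = s * Dk a 0 g s - Dk a 0 (\<lambda>x. x * g x) s"
    using Dk_Suc[OF 0(1)] by blast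
  note d1 = DERIV_mult'[OF DERIV_ident Dk0_deriv[OF 0(1) 0(2)]]
  note d2 = Dk0_deriv[OF g2 0(2)]
  note d = Deriv.field_differentiable_diff[OF d1 d2]
  have "(Dk a (Suc 0) g has_real_derivative (t * g t + 1 * Dk a 0 g t - t * g t)) (at t within {a..b})"
    by (rule has_field_derivative_transform_within[OF d zero_less_one 0(2)]) (use eq in auto)
  thus ?case by simp
next
  case (Suc k)
  have g2: "continuous_on {a..b} (\<lambda>x. x * g x)" using Suc by (intro continuous_intros)
  have eq: "\<forall>s\<in>{a..b}. Dk a (Suc (Suc k)) g s = s * Dk a (Suc k) g s - Dk a (Suc k) (\<lambda>x. x * g x) s"
    using Dk_Suc[OF Suc(2)] by blast
  note d1 = DERIV_mult'[OF DERIV_ident Suc.IH[OF Suc(2) Suc(3)]]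
  note d2 = Suc.IH[OF g2 Suc(3)]
  have e: "t * (real (Suc k) * Dk a k g t) + 1 * Dk a (Suc k) g t - real (Suc k) * Dk a k (\<lambda>x. x * g x) t
      = real (Suc (Suc k)) * Dk a (Suc k) g t"
  proof -
    have h: "Dk a (Suc k) g t = t * Dk a k g t - Dk a k (\<lambda>x. x * g x) t" by (rule Dk_Suc[OF Suc(2) Suc(3)])
    show ?thesis unfolding h by (simp add: algebra_simps)
  qed
  have d: "((\<lambda>s. s * Dk a (Suc k) g s - Dk a (Suc k) (\<lambda>x. x * g x) s) has_real_derivative
       real (Suc (Suc k)) * Dk a (Suc k) g t) (at t within {a..b})"
    by (rule DERIV_cong[OF Deriv.field_differentiable_diff[OF d1 d2] e])
  show ?case
    by (rule has_field_derivative_transform_within[OF d zero_less_one Suc(3)]) (use eq in auto)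
qed

definition alt :: "(real \<Rightarrow> real) \<Rightarrow> real \<Rightarrow> real \<Rightarrow> nat \<Rightarrow> bool" where
  "alt g \<alpha> \<beta> n \<longleftrightarrow> (\<exists>z::nat \<Rightarrow> real. (\<forall>i<n. \<alpha> < z i \<and> z i < \<beta> \<and> g (z i) \<noteq> 0) \<and>
      (\<forall>i. Suc i < n \<longrightarrow> z i < z (Suc i) \<and> g (z i) * g (z (Suc i)) < 0))"

definition Rel :: "(real \<Rightarrow> real) \<Rightarrow> (real \<Rightarrow> real) \<Rightarrow> real \<Rightarrow> real \<Rightarrow> real \<Rightarrow> bool" where
  "Rel g g' c \<alpha> \<beta> \<longleftrightarrow> (\<forall>s t. \<alpha> \<le> s \<longrightarrow> s \<le> t \<longrightarrow> t \<le> \<beta> \<longrightarrow>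
      ((\<lambda>x. c * g' x) has_integral (g t - g s)) {s..t})"

lemma alt_zero: "alt g \<alpha> \<beta> 0" unfolding alt_def by auto

lemma Rel_sub: "Rel g g' c \<alpha> \<beta> \<Longrightarrow> \<alpha> \<le> \<alpha>' \<Longrightarrow> \<beta>' \<le> \<beta> \<Longrightarrow> Rel g g' c \<alpha>' \<beta>'"
  unfolding Rel_def by auto

lemma mvt_sign:
  assumes R: "Rel g g' c \<alpha> \<beta>" and c: "c > 0" and gc: "continuous_on {\<alpha>..\<beta>} g'"
    and st: "s < t" "\<alpha> \<le> s" "t \<le> \<beta>" and D: "g t - g s \<noteq> 0"
  shows "\<exists>w\<in>{s<..<t}. g' w * (g t - g s) > 0"
proof -
  have I: "((\<lambda>x. c * g' x) has_integral (g t - g s)) {s..t}" using R st unfolding Rel_def by auto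
  have C: "continuous_on {s..t} (\<lambda>x. c * g' x)"
    by (intro continuous_intros continuous_on_subset[OF gc]) (use st in auto)
  show ?thesis
  proof (cases "g t - g s > 0")
    case True
    then obtain w where w: "w\<in>{s<..<t}" "c * g' w > 0" using integral_pos_point[OF st(1) I C] by auto
    hence "g' w > 0" using c by (simp add: zero_less_mult_iff)
    thus ?thesis using w True by (intro bexI[of _ w]) auto
  next
    case False
    hence F: "g t - g s < 0" using D by auto
    then obtain w where w: "w\<in>{s<..<t}" "c * g' w < 0" using integral_neg_point[OF st(1) I C] by auto
    hence "g' w < 0" using c by (simp add: mult_less_0_iff)
    thus ?thesis using w F by (intro bexI[of _ w]) (auto simp: mult_neg_neg)
  qed
qed

lemma sign_aux1: fixes a b x y :: real
  shows "a * x > 0 \<Longrightarrow> b * y > 0 \<Longrightarrow> x * y < 0 \<Longrightarrow> a * b < 0"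
  by (smt (verit) mult_neg_neg mult_pos_pos zero_less_mult_iff mult_less_0_iff)

lemma incr_range:
  fixes u :: "nat \<Rightarrow> real"
  assumes "\<forall>i<m. u i < u (Suc i)" "i \<le> m"
  shows "u 0 \<le> u i \<and> u i \<le> u m"
proof -
  have a: "u 0 \<le> u i" if "i \<le> m" for i using that
    by (induction i) (use assms(1) in \<open>auto, smt (verit) Suc_le_eq\<close>)
  have b: "u i \<le> u m" if "i \<le> m" for i using that
  proof (induction "m - i" arbitrary: i)
    case 0 thus ?case by simp
  next
    case (Suc d)
    hence "u (Suc i) \<le> u m" by auto
    moreover have "u i < u (Suc i)" using assms(1) Suc by auto
    ultimately show ?case by simp
  qed
  show ?thesis using a b assms(2) by auto
qed

lemma alt_from_diffs:
  fixes u :: "nat \<Rightarrow> real"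
  assumes mono: "\<forall>i<m. u i < u (Suc i)" and lo: "\<alpha> \<le> u 0" and hi: "u m \<le> \<beta>"
    and D: "\<forall>i<m. g (u (Suc i)) - g (u i) \<noteq> 0"
    and A: "\<forall>i. Suc i < m \<longrightarrow> (g (u (Suc i)) - g (u i)) * (g (u (Suc (Suc i))) - g (u (Suc i))) < 0"
    and R: "Rel g g' c \<alpha> \<beta>" and c: "c > 0" and gc: "continuous_on {\<alpha>..\<beta>} g'"
  shows "alt g' \<alpha> \<beta> m"
proof -
  have "\<forall>i. \<exists>w. i < m \<longrightarrow> w \<in> {u i<..<u (Suc i)} \<and> g' w * (g (u (Suc i)) - g (u i)) > 0"
  proof
    fix i show "\<exists>w. i < m \<longrightarrow> w \<in> {u i<..<u (Suc i)} \<and> g' w * (g (u (Suc i)) - g (u i)) > 0"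
    proof (cases "i < m")
      case True
      have r1: "\<alpha> \<le> u i" using incr_range[OF mono, of i] True lo by auto
      have r2: "u (Suc i) \<le> \<beta>" using incr_range[OF mono, of "Suc i"] True hi by auto
      show ?thesis using mvt_sign[OF R c gc mono[rule_format, OF True] r1 r2] D True by auto
    qed auto
  qed
  then obtain w where w: "\<And>i. i < m \<Longrightarrow> w i \<in> {u i<..<u (Suc i)} \<and> g' (w i) * (g (u (Suc i)) - g (u i)) > 0"
    by metis
  show ?thesis unfolding alt_def
  proof (intro exI[of _ w] conjI allI impI)
    fix i assume i: "i < m"
    have r1: "\<alpha> \<le> u i" using incr_range[OF mono, of i] i lo by auto
    have r2: "u (Suc i) \<le> \<beta>" using incr_range[OF mono, of "Suc i"] i hi by auto
    show "\<alpha> < w i" "w i < \<beta>" using w[OF i] r1 r2 by auto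
    show "g' (w i) \<noteq> 0" using w[OF i] by auto
  next
    fix i assume i: "Suc i < m"
    show "w i < w (Suc i)" using w[of i] w[of "Suc i"] i by auto
    have i1: "i < m" using i by simp
    show "g' (w i) * g' (w (Suc i)) < 0"
      by (rule sign_aux1[OF conjunct2[OF w[OF i1]] conjunct2[OF w[OF i]] A[rule_format, OF i]])
  qed
qed

lemma sign_aux2: fixes x y z :: real
  shows "x * y < 0 \<Longrightarrow> y * z < 0 \<Longrightarrow> (y - x) * (z - y) < 0"
  by (smt (verit) mult_neg_neg mult_pos_pos zero_less_mult_iff mult_less_0_iff)

lemma alt_step_plain:
  assumes a: "alt g \<alpha> \<beta> n" and R: "Rel g g' c \<alpha> \<beta>" and c: "c > 0"
    and gc: "continuous_on {\<alpha>..\<beta>} g'"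
  shows "alt g' \<alpha> \<beta> (n - 1)"
proof (cases "n \<le> 1")
  case True thus ?thesis using alt_zero by (metis diff_is_0_eq)
next
  case False
  obtain z where z1: "\<forall>i<n. \<alpha> < z i \<and> z i < \<beta> \<and> g (z i) \<noteq> 0"
    and z2: "\<forall>i. Suc i < n \<longrightarrow> z i < z (Suc i) \<and> g (z i) * g (z (Suc i)) < 0"
    using a unfolding alt_def by blast
  show ?thesis
  proof (rule alt_from_diffs[OF _ _ _ _ _ R c gc, where u=z])
    show "\<forall>i<n - 1. z i < z (Suc i)" using z2 by auto
    show "\<alpha> \<le> z 0" using z1 False by auto
    have "n - 1 < n" using False by simp
    thus "z (n - 1) \<le> \<beta>" using z1 by (meson less_imp_le)
    show "\<forall>i<n - 1. g (z (Suc i)) - g (z i) \<noteq> 0"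
    proof (intro allI impI)
      fix i assume "i < n - 1"
      hence "Suc i < n" by simp
      hence "g (z i) * g (z (Suc i)) < 0" using z2 by blast
      thus "g (z (Suc i)) - g (z i) \<noteq> 0" by auto
    qed
    show "\<forall>i. Suc i < n - 1 \<longrightarrow> (g (z (Suc i)) - g (z i)) * (g (z (Suc (Suc i))) - g (z (Suc i))) < 0"
    proof (intro allI impI)
      fix i assume "Suc i < n - 1"
      hence "Suc i < n" "Suc (Suc i) < n" by auto
      thus "(g (z (Suc i)) - g (z i)) * (g (z (Suc (Suc i))) - g (z (Suc i))) < 0"
        using z2 sign_aux2 by blast
    qed
  qed
qed

lemma sign_aux3: fixes x y :: real
  shows "y \<noteq> 0 \<Longrightarrow> x * y \<le> 0 \<Longrightarrow> (y - x) * y > 0"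
  by (smt (verit) mult_le_0_iff zero_less_mult_iff mult_pos_pos mult_neg_neg left_diff_distrib)

lemma alt_step_ends:
  assumes a: "alt g \<alpha> \<beta> n" and n: "n \<ge> 1" and R: "Rel g g' c \<alpha> \<beta>" and c: "c > 0"
    and gc: "continuous_on {\<alpha>..\<beta>} g'" and ga: "g \<alpha> = 0" and gb: "g \<beta> = 0"
  shows "alt g' \<alpha> \<beta> (Suc n)"
proof -
  obtain z where z1: "\<forall>i<n. \<alpha> < z i \<and> z i < \<beta> \<and> g (z i) \<noteq> 0"
    and z2: "\<forall>i. Suc i < n \<longrightarrow> z i < z (Suc i) \<and> g (z i) * g (z (Suc i)) < 0"
    using a unfolding alt_def by blast
  define u where "u i = (if i = 0 then \<alpha> else if i \<le> n then z (i - 1) else \<beta>)" for i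
  define V where "V i = g (u i)" for i
  have V0: "V 0 = 0" unfolding V_def u_def using ga by simp
  have Vn: "V (Suc n) = 0" unfolding V_def u_def using gb by simp
  have Vnz: "V i \<noteq> 0" if "1 \<le> i" "i \<le> n" for i
    unfolding V_def u_def using that z1 by auto
  have Valt: "V i * V (Suc i) < 0" if "1 \<le> i" "Suc i \<le> n" for i
  proof -
    have "Suc (i - 1) < n" using that by auto
    hence "g (z (i - 1)) * g (z (Suc (i - 1))) < 0" using z2 by blast
    moreover have "Suc (i - 1) = i" using that by auto
    ultimately show ?thesis unfolding V_def u_def using that by auto
  qed
  have Vle: "V i * V (Suc i) \<le> 0" if "i \<le> n" for i
  proof (cases "i = 0")
    case True thus ?thesis using V0 by simp
  next
    case False
    show ?thesis
    proof (cases "i = n")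
      case True thus ?thesis using Vn by simp
    next
      case False
      thus ?thesis using Valt[of i] \<open>i \<noteq> 0\<close> that by fastforce
    qed
  qed
  have Dsign: "(V (Suc i) - V i) * V (Suc i) > 0" if "i < n" for i
    using sign_aux3[OF Vnz[of "Suc i"] Vle[of i]] that by (simp add: mult.commute)
  have Dlast: "(V (Suc n) - V n) * V n < 0"
  proof -
    have "V n \<noteq> 0" using Vnz[of n] n by simp
    hence "V n * V n > 0" by (metis not_real_square_gt_zero)
    thus ?thesis using Vn by simp
  qed
  show ?thesis
  proof (rule alt_from_diffs[OF _ _ _ _ _ R c gc, where u=u])
    show "\<forall>i<Suc n. u i < u (Suc i)"
    proof (intro allI impI)
      fix i assume i: "i < Suc n"
      show "u i < u (Suc i)"
      proof (cases "i = 0")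
        case True thus ?thesis unfolding u_def using z1 n by auto
      next
        case False
        show ?thesis
        proof (cases "i = n")
          case True thus ?thesis unfolding u_def using z1 False by auto
        next
          case False2: False
          hence "Suc (i - 1) < n" using i False by auto
          hence "z (i - 1) < z (Suc (i - 1))" using z2 by blast
          moreover have "Suc (i - 1) = i" using False by auto
          ultimately show ?thesis unfolding u_def using i False False2 by auto
        qed
      qed
    qed
    show "\<alpha> \<le> u 0" unfolding u_def by simp
    show "u (Suc n) \<le> \<beta>" unfolding u_def by simp
    show "\<forall>i<Suc n. g (u (Suc i)) - g (u i) \<noteq> 0"
    proof (intro allI impI)
      fix i assume i: "i < Suc n"
      show "g (u (Suc i)) - g (u i) \<noteq> 0"
      proof (cases "i = n")
        case True thus ?thesis using Dlast unfolding V_def by auto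
      next
        case False thus ?thesis using Dsign[of i] i unfolding V_def by auto
      qed
    qed
    show "\<forall>i. Suc i < Suc n \<longrightarrow> (g (u (Suc i)) - g (u i)) * (g (u (Suc (Suc i))) - g (u (Suc i))) < 0"
    proof (intro allI impI)
      fix i assume i: "Suc i < Suc n"
      have d1: "(V (Suc i) - V i) * V (Suc i) > 0" using Dsign i by simp
      show "(g (u (Suc i)) - g (u i)) * (g (u (Suc (Suc i))) - g (u (Suc i))) < 0"
      proof (cases "Suc i = n")
        case True
        have "(V (Suc (Suc i)) - V (Suc i)) * V (Suc i) < 0" using Dlast True by simp
        thus ?thesis using d1 unfolding V_def
          by (smt (verit) mult_neg_neg mult_pos_pos zero_less_mult_iff mult_less_0_iff)
      next
        case False
        hence "Suc i < n" using i by simp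
        hence d2: "(V (Suc (Suc i)) - V (Suc i)) * V (Suc (Suc i)) > 0" using Dsign by simp
        have "V (Suc i) * V (Suc (Suc i)) < 0" using Valt[of "Suc i"] \<open>Suc i < n\<close> by simp
        thus ?thesis using sign_aux1[OF d1 d2] unfolding V_def by simp
      qed
    qed
  qed
qed

lemma incr_mono:
  fixes u :: "nat \<Rightarrow> real"
  assumes "\<forall>i<m. u i < u (Suc i)" "i \<le> j" "j \<le> m"
  shows "u i \<le> u j"
  using assms(2,3)
proof (induction j)
  case 0 thus ?case by simp
next
  case (Suc j)
  show ?case
  proof (cases "i = Suc j")
    case True thus ?thesis by simp
  next
    case False
    hence "u i \<le> u j" using Suc by simp
    moreover have "u j < u (Suc j)" using assms(1) Suc by simp
    ultimately show ?thesis by simp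
  qed
qed

lemma sign_aux4: fixes a x y :: real
  shows "a * x > 0 \<Longrightarrow> x * y > 0 \<Longrightarrow> a * y > 0"
  by (smt (verit) mult_neg_neg mult_pos_pos zero_less_mult_iff mult_less_0_iff)

lemma alt_start:
  fixes X :: "nat \<Rightarrow> real"
  assumes r: "r \<ge> 1" and Xm: "\<forall>i<r. X i < X (Suc i)" and a: "\<alpha> = X 0" and b: "\<beta> = X r"
    and HX: "\<forall>i\<le>r. G (X i) = 0" and Hnz: "\<forall>i<r. \<exists>s\<in>{X i<..<X (Suc i)}. G s \<noteq> 0"
    and R: "Rel G g c \<alpha> \<beta>" and c: "c > 0" and gc: "continuous_on {\<alpha>..\<beta>} g"
  shows "alt g \<alpha> \<beta> (Suc r)"
proof -
  obtain s where s: "\<And>i. i < r \<Longrightarrow> s i \<in> {X i<..<X (Suc i)} \<and> G (s i) \<noteq> 0"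
    using Hnz by metis
  have rng: "\<alpha> \<le> X i \<and> X (Suc i) \<le> \<beta>" if "i < r" for i
    using incr_range[OF Xm, of i] incr_range[OF Xm, of "Suc i"] that a b by auto
  have "\<forall>i. \<exists>w. i < r \<longrightarrow> w \<in> {X i<..<s i} \<and> g w * G (s i) > 0"
  proof
    fix i show "\<exists>w. i < r \<longrightarrow> w \<in> {X i<..<s i} \<and> g w * G (s i) > 0"
    proof (cases "i < r")
      case True
      have "\<exists>w\<in>{X i<..<s i}. g w * (G (s i) - G (X i)) > 0"
        by (rule mvt_sign[OF R c gc]) (use s[OF True] rng[OF True] HX True in auto)
      thus ?thesis using HX True by auto
    qed auto
  qed
  then obtain w where w: "\<And>i. i < r \<Longrightarrow> w i \<in> {X i<..<s i} \<and> g (w i) * G (s i) > 0" by metis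
  have "\<forall>i. \<exists>w. i < r \<longrightarrow> w \<in> {s i<..<X (Suc i)} \<and> g w * (- G (s i)) > 0"
  proof
    fix i show "\<exists>w. i < r \<longrightarrow> w \<in> {s i<..<X (Suc i)} \<and> g w * (- G (s i)) > 0"
    proof (cases "i < r")
      case True
      have "\<exists>w\<in>{s i<..<X (Suc i)}. g w * (G (X (Suc i)) - G (s i)) > 0"
        by (rule mvt_sign[OF R c gc]) (use s[OF True] rng[OF True] HX True in auto)
      thus ?thesis using HX True by auto
    qed auto
  qed
  then obtain w' where w': "\<And>i. i < r \<Longrightarrow> w' i \<in> {s i<..<X (Suc i)} \<and> g (w' i) * (- G (s i)) > 0" by metis
  define \<epsilon> :: real where "\<epsilon> = (if G (s 0) > 0 then 1 else -1)"
  define sg :: "nat \<Rightarrow> real" where "sg k = (-1)^k * \<epsilon>" for k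
  define z where "z k = (if k = 0 then w 0 else if sg k * G (s (k - 1)) > 0 then w (k - 1) else w' (k - 1))" for k
  have r0: "0 < r" using r by simp
  have sgnz: "sg k \<noteq> 0" for k unfolding sg_def \<epsilon>_def by auto
  have zsg: "g (z k) * sg k > 0" if "k \<le> r" for k
  proof (cases "k = 0")
    case True
    have "G (s 0) * \<epsilon> > 0" unfolding \<epsilon>_def using s[OF r0] by auto
    thus ?thesis using True sign_aux4[OF conjunct2[OF w[OF r0]]] unfolding z_def sg_def by simp
  next
    case False
    hence k: "k - 1 < r" using that by simp
    show ?thesis
    proof (cases "sg k * G (s (k - 1)) > 0")
      case True
      hence "G (s (k - 1)) * sg k > 0" by (simp add: mult.commute)
      thus ?thesis using False True sign_aux4[OF conjunct2[OF w[OF k]]] unfolding z_def by simp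
    next
      case F: False
      have "G (s (k - 1)) \<noteq> 0" using s[OF k] by simp
      hence "sg k * G (s (k - 1)) \<noteq> 0" using sgnz by simp
      hence "sg k * G (s (k - 1)) < 0" using F by (smt (verit))
      hence "(- G (s (k - 1))) * sg k > 0" by (simp add: mult.commute)
      thus ?thesis using False F sign_aux4[OF conjunct2[OF w'[OF k]]] unfolding z_def by simp
    qed
  qed
  have zin: "z k \<in> {X (k - 1)<..<X k}" if "1 \<le> k" "k \<le> r" for k
  proof -
    have k: "k - 1 < r" using that by simp
    have sk: "Suc (k - 1) = k" using that by simp
    show ?thesis using that w[OF k] w'[OF k] s[OF k] sk unfolding z_def by auto
  qed
  have z01: "z 0 < z 1"
  proof -
    have "sg 1 * G (s 0) < 0" unfolding sg_def \<epsilon>_def using s[OF r0]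
      by (auto simp: mult_less_0_iff)
    hence "z 1 = w' 0" unfolding z_def by simp
    thus ?thesis using w[OF r0] w'[OF r0] unfolding z_def by auto
  qed
  show ?thesis unfolding alt_def
  proof (intro exI[of _ z] conjI allI impI)
    fix i assume i: "i < Suc r"
    show "g (z i) \<noteq> 0" using zsg[of i] i by auto
    show "\<alpha> < z i"
    proof (cases "i = 0")
      case True thus ?thesis using w[OF r0] rng[OF r0] s[OF r0] unfolding z_def by auto
    next
      case False
      hence "i - 1 < r" using i by simp
      thus ?thesis using zin[of i] i rng[of "i - 1"] False by force
    qed
    show "z i < \<beta>"
    proof (cases "i = 0")
      case True thus ?thesis using w[OF r0] rng[OF r0] s[OF r0] unfolding z_def by auto
    next
      case False
      hence "i - 1 < r" using i by simp
      thus ?thesis using zin[of i] i rng[of "i - 1"] False by force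
    qed
  next
    fix i assume i: "Suc i < Suc r"
    show "z i < z (Suc i)"
    proof (cases "i = 0")
      case True thus ?thesis using z01 by simp
    next
      case False
      have "z i < X i" using zin[of i] i False by auto
      moreover have "X i < z (Suc i)" using zin[of "Suc i"] i by auto
      ultimately show ?thesis by simp
    qed
    have "sg i * sg (Suc i) < 0" unfolding sg_def \<epsilon>_def by auto
    thus "g (z i) * g (z (Suc i)) < 0"
      using sign_aux1[OF zsg[of i] zsg[of "Suc i"]] i by simp
  qed
qed

lemma poly_deg1_two_roots:
  fixes P :: "real poly"
  assumes "degree P \<le> 1" "poly P x = 0" "poly P y = 0" "x \<noteq> y"
  shows "P = 0"
proof (rule ccontr)
  assume P: "P \<noteq> 0"
  have "{x, y} \<subseteq> {x. poly P x = 0}" using assms by auto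
  hence "card {x, y} \<le> card {x. poly P x = 0}" using poly_roots_finite[OF P] by (rule card_mono[rotated])
  also have "\<dots> \<le> degree P" by (rule card_poly_roots_bound[OF P])
  finally show False using assms by simp
qed

lemma alt_bound_linear:
  assumes Hc: "Hc > 0" and c: "c \<ge> 1" and gc: "continuous_on {\<alpha>..\<alpha> + real c * Hc} g"
    and pc: "\<forall>k<c. \<exists>P. degree P \<le> 1 \<and> (\<forall>x\<in>{mesh_pt \<alpha> Hc k..mesh_pt \<alpha> Hc (Suc k)}. g x = poly P x)"
    and a: "alt g \<alpha> (\<alpha> + real c * Hc) n"
  shows "n \<le> Suc c"
proof (cases "n \<le> 1")
  case True thus ?thesis by simp
next
  case False
  define \<beta> where "\<beta> = \<alpha> + real c * Hc"
  obtain z where z1: "\<forall>i<n. \<alpha> < z i \<and> z i < \<beta> \<and> g (z i) \<noteq> 0"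
    and z2: "\<forall>i. Suc i < n \<longrightarrow> z i < z (Suc i) \<and> g (z i) * g (z (Suc i)) < 0"
    using a unfolding alt_def \<beta>_def by blast
  obtain P where P: "\<And>k. k < c \<Longrightarrow> degree (P k) \<le> 1 \<and> (\<forall>x\<in>{mesh_pt \<alpha> Hc k..mesh_pt \<alpha> Hc (Suc k)}. g x = poly (P k) x)"
    using pc by metis
  have "\<forall>i. \<exists>w. Suc i < n \<longrightarrow> w \<in> {z i..z (Suc i)} \<and> g w = 0"
  proof
    fix i show "\<exists>w. Suc i < n \<longrightarrow> w \<in> {z i..z (Suc i)} \<and> g w = 0"
    proof (cases "Suc i < n")
      case True
      have zz: "z i < z (Suc i)" "g (z i) * g (z (Suc i)) < 0" using z2 True by auto
      have "\<alpha> < z i" "z (Suc i) < \<beta>" using z1 True by auto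
      hence sub: "{z i..z (Suc i)} \<subseteq> {\<alpha>..\<beta>}" by auto
      have gc': "continuous_on {z i..z (Suc i)} g" using gc sub unfolding \<beta>_def by (rule continuous_on_subset)
      have "\<exists>x. z i \<le> x \<and> x \<le> z (Suc i) \<and> g x = 0"
      proof (cases "g (z i) < 0")
        case True
        hence "g (z (Suc i)) > 0" using zz(2) by (simp add: mult_less_0_iff)
        thus ?thesis using IVT'[of g "z i" 0 "z (Suc i)", OF _ _ _ gc'] True zz(1) by auto
      next
        case False
        hence "g (z i) > 0" "g (z (Suc i)) < 0" using zz(2) by (auto simp: mult_less_0_iff)
        thus ?thesis using IVT2'[of g "z (Suc i)" 0 "z i", OF _ _ _ gc'] zz(1) by auto
      qed
      thus ?thesis using True by auto
    qed auto
  qed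
  then obtain w where w: "\<And>i. Suc i < n \<Longrightarrow> w i \<in> {z i..z (Suc i)} \<and> g (w i) = 0" by metis
  have "\<forall>i. \<exists>k. Suc i < n \<longrightarrow> k < c \<and> w i \<in> {mesh_pt \<alpha> Hc k..mesh_pt \<alpha> Hc (Suc k)}"
  proof
    fix i show "\<exists>k. Suc i < n \<longrightarrow> k < c \<and> w i \<in> {mesh_pt \<alpha> Hc k..mesh_pt \<alpha> Hc (Suc k)}"
    proof (cases "Suc i < n")
      case True
      have "\<alpha> < z i" "z (Suc i) < \<beta>" using z1 True by auto
      hence "w i \<in> {\<alpha>..\<alpha> + real c * Hc}" using w[OF True] unfolding \<beta>_def by auto
      thus ?thesis using mesh_cover[OF Hc c] by blast
    qed auto
  qed
  then obtain kk where kk: "\<And>i. Suc i < n \<Longrightarrow> kk i < c \<and> w i \<in> {mesh_pt \<alpha> Hc (kk i)..mesh_pt \<alpha> Hc (Suc (kk i))}"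
    by metis
  have wz: "w i < z (Suc i)" if "Suc i < n" for i
  proof -
    have "w i \<noteq> z (Suc i)" using w[OF that] z1 that by auto
    thus ?thesis using w[OF that] by auto
  qed
  have inj: "inj_on kk {..<n - 1}"
  proof (rule inj_onI)
    fix i j assume i: "i \<in> {..<n - 1}" and j: "j \<in> {..<n - 1}" and e: "kk i = kk j"
    show "i = j"
    proof (rule ccontr)
      assume "i \<noteq> j"
      then consider "i < j" | "j < i" by linarith
      thus False
      proof cases
        case 1
        have si: "Suc i < n" and sj: "Suc j < n" using i j by auto
        define k where "k = kk i"
        have kc: "k < c" using kk[OF si] unfolding k_def by simp
        have wi: "w i \<in> {mesh_pt \<alpha> Hc k..mesh_pt \<alpha> Hc (Suc k)}" using kk[OF si] unfolding k_def by simp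
        have wj: "w j \<in> {mesh_pt \<alpha> Hc k..mesh_pt \<alpha> Hc (Suc k)}" using kk[OF sj] e unfolding k_def by simp
        have zle: "z (Suc i) \<le> z j" using incr_mono[of "n - 1" z "Suc i" j] z2 1 j by auto
        have "z j \<le> w j" using w[OF sj] by simp
        have mid: "z (Suc i) \<in> {mesh_pt \<alpha> Hc k..mesh_pt \<alpha> Hc (Suc k)}"
          using wi wj wz[OF si] zle \<open>z j \<le> w j\<close> by auto
        have "poly (P k) (w i) = 0" using P[OF kc] wi w[OF si] by auto
        moreover have "poly (P k) (w j) = 0" using P[OF kc] wj w[OF sj] by auto
        moreover have "w i \<noteq> w j" using wz[OF si] zle \<open>z j \<le> w j\<close> by auto
        ultimately have "P k = 0" using poly_deg1_two_roots P[OF kc] by blast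
        hence "g (z (Suc i)) = 0" using P[OF kc] mid by auto
        thus False using z1 si by auto
      next
        case 2
        have si: "Suc i < n" and sj: "Suc j < n" using i j by auto
        define k where "k = kk j"
        have kc: "k < c" using kk[OF sj] unfolding k_def by simp
        have wj: "w j \<in> {mesh_pt \<alpha> Hc k..mesh_pt \<alpha> Hc (Suc k)}" using kk[OF sj] unfolding k_def by simp
        have wi: "w i \<in> {mesh_pt \<alpha> Hc k..mesh_pt \<alpha> Hc (Suc k)}" using kk[OF si] e unfolding k_def by simp
        have zle: "z (Suc j) \<le> z i" using incr_mono[of "n - 1" z "Suc j" i] z2 2 i by auto
        have "z i \<le> w i" using w[OF si] by simp
        have mid: "z (Suc j) \<in> {mesh_pt \<alpha> Hc k..mesh_pt \<alpha> Hc (Suc k)}"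
          using wi wj wz[OF sj] zle \<open>z i \<le> w i\<close> by auto
        have "poly (P k) (w i) = 0" using P[OF kc] wi w[OF si] by auto
        moreover have "poly (P k) (w j) = 0" using P[OF kc] wj w[OF sj] by auto
        moreover have "w i \<noteq> w j" using wz[OF sj] zle \<open>z i \<le> w i\<close> by auto
        ultimately have "P k = 0" using poly_deg1_two_roots P[OF kc] by blast
        hence "g (z (Suc j)) = 0" using P[OF kc] mid by auto
        thus False using z1 sj by auto
      qed
    qed
  qed
  have "kk ` {..<n - 1} \<subseteq> {..<c}" using kk by auto
  hence "card {..<n - 1} \<le> card {..<c}" using card_inj_on_le[OF inj, of "{..<c}"] by blast
  thus ?thesis by simp
qed

lemma Rel_zero_deriv:
  assumes R: "Rel g g' c a b" and c: "c > 0" and gc: "continuous_on {a..b} g'"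
    and st: "a \<le> s" "t \<le> b" and z: "\<forall>x\<in>{s<..<t}. g x = 0" and w: "w \<in> {s<..<t}"
  shows "g' w = 0"
proof -
  define s' where "s' = (s + w) / 2"
  define t' where "t' = (w + t) / 2"
  have o: "s < s'" "s' < w" "w < t'" "t' < t" using w unfolding s'_def t'_def by auto
  have gc': "continuous_on {s'..t'} (\<lambda>x. c * g' x)"
    by (intro continuous_intros continuous_on_subset[OF gc]) (use o st in auto)
  have d1: "((\<lambda>u. integral {s'..u} (\<lambda>x. c * g' x)) has_real_derivative c * g' w) (at w within {s'..t'})"
    using integral_has_real_derivative[OF gc', of w] o by auto
  have eq: "integral {s'..u} (\<lambda>x. c * g' x) = 0" if "u \<in> {s'..t'}" for u
  proof -
    have "((\<lambda>x. c * g' x) has_integral (g u - g s')) {s'..u}" using R that o st unfolding Rel_def by auto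
    moreover have "g u = 0" "g s' = 0" using z that o by auto
    ultimately have "((\<lambda>x. c * g' x) has_integral 0) {s'..u}" by simp
    thus ?thesis by (rule integral_unique)
  qed
  have d2: "((\<lambda>u. integral {s'..u} (\<lambda>x. c * g' x)) has_real_derivative 0) (at w within {s'..t'})"
    by (rule has_field_derivative_transform_within[OF DERIV_const[of 0] zero_less_one]) (use o eq in auto)
  have at: "at w within {s'..t'} = at w" using o by (intro at_within_Icc_at) auto
  have "c * g' w = 0" using DERIV_unique[OF d1[unfolded at] d2[unfolded at]] .
  thus ?thesis using c by simp
qed

lemma Rel_const:
  assumes R: "Rel g g' c a b" and st: "a \<le> s" "s \<le> t" "t \<le> b" and z: "\<forall>x\<in>{s..t}. g' x = 0"
  shows "g t = g s"
proof -
  have I: "((\<lambda>x. c * g' x) has_integral (g t - g s)) {s..t}" using R st unfolding Rel_def by auto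
  have e2: "integral {s..t} (\<lambda>x. c * g' x) = integral {s..t} (\<lambda>x. 0)" by (rule integral_cong) (use z in auto)
  have e1: "integral {s..t} (\<lambda>x. c * g' x) = g t - g s" by (rule integral_unique[OF I])
  have "g t - g s = integral {s..t} (\<lambda>x. 0::real)" using e1 e2 by metis
  hence "g t - g s = 0" by simp
  thus ?thesis by simp
qed

lemma Rel_from_deriv:
  assumes d: "\<forall>x\<in>{a..b}. (g has_real_derivative c * g' x) (at x within {a..b})"
  shows "Rel g g' c a b"
  unfolding Rel_def
proof (intro allI impI)
  fix s t assume st: "a \<le> s" "s \<le> t" "t \<le> b"
  show "((\<lambda>x. c * g' x) has_integral g t - g s) {s..t}"
  proof (rule fundamental_theorem_of_calculus[OF st(2)])
    fix x assume x: "x \<in> {s..t}"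
    have "(g has_real_derivative c * g' x) (at x within {a..b})" using d x st by auto
    hence "(g has_real_derivative c * g' x) (at x within {s..t})"
      by (rule DERIV_subset) (use st in auto)
    thus "(g has_vector_derivative c * g' x) (at x within {s..t})"
      by (simp add: has_real_derivative_iff_has_vector_derivative)
  qed
qed

lemma Rel_from_deriv_interior:
  assumes S: "finite S" and gc: "continuous_on {a..b} g"
    and d: "\<forall>x\<in>{a<..<b} - S. (g has_real_derivative c * g' x) (at x)"
  shows "Rel g g' c a b"
  unfolding Rel_def
proof (intro allI impI)
  fix s t assume st: "a \<le> s" "s \<le> t" "t \<le> b"
  show "((\<lambda>x. c * g' x) has_integral g t - g s) {s..t}"
  proof (rule fundamental_theorem_of_calculus_interior_strong[OF S st(2)])
    fix x assume x: "x \<in> {s<..<t} - S"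
    hence "(g has_real_derivative c * g' x) (at x)" using d st by auto
    thus "(g has_vector_derivative c * g' x) (at x)"
      by (simp add: has_real_derivative_iff_has_vector_derivative)
  next
    show "continuous_on {s..t} g" by (rule continuous_on_subset[OF gc]) (use st in auto)
  qed
qed

locale sp =
  fixes a b :: real and N p L :: nat
  assumes ab: "a < b" and N1: "N \<ge> 1" and p2: "p \<ge> 2" and L1: "L \<ge> 1" and dv: "2 ^ L dvd N"
begin

definition "h = (b - a) / real N"
definition "Hc = coarse_mesh_size a b N L"
definition "M = N div 2 ^ L"
definition "xk i = mesh_pt a h i"
definition "yk k = mesh_pt a Hc k"

lemma h_pos: "h > 0" unfolding h_def using ab N1 by simp
lemma Hc_eq: "Hc = 2 ^ L * h" unfolding Hc_def coarse_mesh_size_def h_def by simp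
lemma Hc_pos: "Hc > 0" using h_pos Hc_eq by simp
lemma N_eq: "N = 2 ^ L * M" unfolding M_def using dv by simp
lemma M1: "M \<ge> 1"
proof -
  have "N \<noteq> 0" using N1 by simp
  hence "M \<noteq> 0" using N_eq by (metis mult_0_right)
  thus ?thesis by simp
qed
lemma N_h: "a + real N * h = b" unfolding h_def using N1 by simp
lemma M_Hc: "a + real M * Hc = b"
proof -
  have "real M * Hc = real N * h" unfolding Hc_eq by (subst N_eq) (simp add: algebra_simps)
  thus ?thesis using N_h by simp
qed
lemma yk_xk: "yk k = xk (k * 2 ^ L)"
  unfolding yk_def xk_def mesh_pt_def Hc_eq by (simp add: algebra_simps)
lemma xk_mono: "i \<le> j \<Longrightarrow> xk i \<le> xk j" unfolding xk_def mesh_pt_def using h_pos by (simp add: mult_right_mono)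
lemma xk_smono: "i < j \<Longrightarrow> xk i < xk j" unfolding xk_def mesh_pt_def using h_pos by simp
lemma yk_mono: "i \<le> j \<Longrightarrow> yk i \<le> yk j" unfolding yk_def mesh_pt_def using Hc_pos by (simp add: mult_right_mono)
lemma yk_smono: "i < j \<Longrightarrow> yk i < yk j" unfolding yk_def mesh_pt_def using Hc_pos by simp
lemma xk0: "xk 0 = a" unfolding xk_def mesh_pt_def by simp
lemma xkN: "xk N = b" unfolding xk_def mesh_pt_def using N_h by simp
lemma yk0: "yk 0 = a" unfolding yk_def mesh_pt_def by simp
lemma ykM: "yk M = b" unfolding yk_def mesh_pt_def using M_Hc by simp
lemma xk_range: "i \<le> N \<Longrightarrow> xk i \<in> {a..b}" using xk_mono[of 0 i] xk_mono[of i N] xk0 xkN by auto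
lemma yk_range: "k \<le> M \<Longrightarrow> yk k \<in> {a..b}" using yk_mono[of 0 k] yk_mono[of k M] yk0 ykM by auto

definition "pc x = min (M - 1) (nat \<lfloor>(x - a) / Hc\<rfloor>)"
lemma pc_in: assumes x: "x \<in> {a..b}" shows "pc x < M \<and> x \<in> {yk (pc x)..yk (Suc (pc x))}"
proof -
  have x': "x \<in> {a..a + real M * Hc}" using x M_Hc by simp
  have x0: "(x - a) / Hc \<ge> 0" using x Hc_pos by auto
  have "real (nat \<lfloor>(x - a) / Hc\<rfloor>) \<le> (x - a) / Hc" using x0 by linarith
  hence "real (pc x) \<le> (x - a) / Hc" unfolding pc_def by (simp add: min_def)
  hence lo: "a + real (pc x) * Hc \<le> x" using Hc_pos by (simp add: field_simps)
  have "(x - a) / Hc \<le> real (pc x) + 1"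
  proof (cases "nat \<lfloor>(x - a) / Hc\<rfloor> \<le> M - 1")
    case True
    hence "pc x = nat \<lfloor>(x - a) / Hc\<rfloor>" unfolding pc_def by simp
    thus ?thesis using x0 by linarith
  next
    case False
    hence "pc x = M - 1" unfolding pc_def by simp
    moreover have "(x - a) / Hc \<le> real M" using x' Hc_pos by (simp add: field_simps)
    ultimately show ?thesis using M1 by (simp add: of_nat_diff)
  qed
  hence hi: "x \<le> a + (real (pc x) + 1) * Hc" using Hc_pos by (simp add: field_simps)
  have "pc x < M" unfolding pc_def using M1 by simp
  thus ?thesis using lo hi unfolding yk_def mesh_pt_def by (auto simp: algebra_simps)
qed

lemma pc_piece:
  assumes k: "k < M" and x: "x \<in> {yk k..yk (Suc k)}"
  shows "pc x = k \<or> (pc x = Suc k \<and> Suc k < M \<and> x = yk (Suc k))"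
proof -
  have lo: "real k \<le> (x - a) / Hc" using x Hc_pos unfolding yk_def mesh_pt_def by (simp add: field_simps)
  have hi: "(x - a) / Hc \<le> real k + 1" using x Hc_pos unfolding yk_def mesh_pt_def by (simp add: field_simps)
  show ?thesis
  proof (cases "(x - a) / Hc < real k + 1")
    case True
    hence "\<lfloor>(x - a) / Hc\<rfloor> = int k" using lo by (simp add: floor_eq_iff)
    thus ?thesis unfolding pc_def using k by simp
  next
    case False
    hence e: "(x - a) / Hc = real k + 1" using hi by simp
    hence "\<lfloor>(x - a) / Hc\<rfloor> = int (Suc k)" by simp
    hence pce: "pc x = min (M - 1) (Suc k)" unfolding pc_def by simp
    have xe: "x = yk (Suc k)" using e Hc_pos unfolding yk_def mesh_pt_def by (simp add: field_simps)
    show ?thesis using pce xe k by (cases "Suc k < M") auto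
  qed
qed

lemma ab_union: "{a..b} = (\<Union>k\<in>{..<M}. {yk k..yk (Suc k)})"
  using mesh_union[OF Hc_pos M1, of a] M_Hc unfolding yk_def by simp

definition "vt i x = (max (xk i - x) 0) ^ p - ((xk i - a) / (b - a)) ^ p * (b - x) ^ p"
definition "wt k x = (b - a) ^ (p - k) * (b - x) ^ k - (b - x) ^ p"

end

locale qsp = sp +
  fixes q :: "real \<Rightarrow> real" and P :: "nat \<Rightarrow> real poly"
  assumes Pdeg: "\<forall>k<M. degree (P k) \<le> p - 1"
    and Pval: "\<forall>k<M. \<forall>x\<in>{yk k..yk (Suc k)}. q x = poly (P k) x"
    and Psm: "\<forall>k. Suc k < M \<longrightarrow> (\<forall>j<p - 1. poly ((pderiv ^^ j) (P k)) (yk (Suc k)) =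
                   poly ((pderiv ^^ j) (P (Suc k))) (yk (Suc k)))"
begin

definition "qd i x = poly ((pderiv ^^ i) (P (pc x))) x"

lemma qd_piece:
  assumes k: "k < M" and x: "x \<in> {yk k..yk (Suc k)}" and i: "i < p - 1"
  shows "qd i x = poly ((pderiv ^^ i) (P k)) x"
  using pc_piece[OF k x] Psm i unfolding qd_def by auto

lemma q_qd: "x \<in> {a..b} \<Longrightarrow> q x = qd 0 x"
  using pc_in[of x] Pval unfolding qd_def by auto

lemma qd_cont: assumes i: "i < p - 1" shows "continuous_on {a..b} (qd i)"
proof -
  have "continuous_on (\<Union>k\<in>{..<M}. {yk k..yk (Suc k)}) (qd i)"
  proof (rule continuous_on_closed_Union)
    fix k assume "k \<in> {..<M}"
    thus "continuous_on {yk k..yk (Suc k)} (qd i)"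
      using qd_piece[OF _ _ i] by (subst continuous_on_cong[OF refl]) (auto intro: continuous_intros)
  qed auto
  thus ?thesis using ab_union by simp
qed

lemma q_cont: "continuous_on {a..b} q"
proof -
  have "continuous_on {a..b} (qd 0)" using qd_cont p2 by simp
  thus ?thesis using q_qd by (subst continuous_on_cong[OF refl]) auto
qed

lemma qd_Rel: assumes i: "Suc i < p - 1" shows "Rel (qd i) (qd (Suc i)) 1 a b"
proof (rule Rel_from_deriv_interior[where S="yk ` {..M}"])
  show "continuous_on {a..b} (qd i)" using qd_cont i by simp
  show "\<forall>x\<in>{a<..<b} - yk ` {..M}. (qd i has_real_derivative 1 * qd (Suc i) x) (at x)"
  proof
    fix x assume x: "x \<in> {a<..<b} - yk ` {..M}"
    define k where "k = pc x"
    have k: "k < M" and xk: "x \<in> {yk k..yk (Suc k)}" using pc_in[of x] x unfolding k_def by auto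
    have "x \<noteq> yk k" "x \<noteq> yk (Suc k)" using x k by auto
    hence xo: "x \<in> {yk k<..<yk (Suc k)}" using xk by auto
    have d: "((\<lambda>y. poly ((pderiv ^^ i) (P k)) y) has_real_derivative poly (pderiv ((pderiv ^^ i) (P k))) x) (at x)"
      by (rule poly_DERIV)
    have "(qd i has_real_derivative poly (pderiv ((pderiv ^^ i) (P k))) x) (at x)"
      by (rule has_field_derivative_transform_within_open[OF d open_greaterThanLessThan xo])
         (use qd_piece[OF k _, of _ i] i in auto)
    moreover have "poly (pderiv ((pderiv ^^ i) (P k))) x = qd (Suc i) x"
      using qd_piece[OF k xk i] qd_piece[OF k xk assms] by simp
    ultimately show "(qd i has_real_derivative 1 * qd (Suc i) x) (at x)" by simp
  qed
qed simp

end

context qsp begin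

definition "Cst = Dk a p q b / (b - a) ^ p"
definition "g j = (if j \<le> p then (\<lambda>t. Dk a (p - j) q t - (t - a) ^ (p - j) * Cst) else qd (j - p - 1))"
definition "cc j = (if j < p then real (p - j) else (1::real))"

lemma cc_pos: "cc j > 0" unfolding cc_def by auto

lemma g_deriv:
  assumes j: "j \<le> p" and t: "t \<in> {a..b}"
  shows "(g j has_real_derivative cc j * g (Suc j) t) (at t within {a..b})"
proof (cases "j < p")
  case True
  define k where "k = p - j - 1"
  have pj: "p - j = Suc k" and psj: "p - Suc j = k" using True unfolding k_def by auto
  note d1 = Dk_deriv[OF q_cont t, of k]
  have d2: "((\<lambda>t. (t - a) ^ Suc k * Cst) has_real_derivative (real (Suc k) * (t - a) ^ k * Cst)) (at t within {a..b})"
  proof -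
    have "((\<lambda>t. t - a) has_real_derivative 1) (at t within {a..b})" by (auto intro!: derivative_eq_intros)
    from DERIV_power[OF this, of "Suc k"]
    have "((\<lambda>t. (t - a) ^ Suc k) has_real_derivative real (Suc k) * (1 * (t - a) ^ k)) (at t within {a..b})" by simp
    from DERIV_cmult_right[OF this, of Cst] show ?thesis by simp
  qed
  have "((\<lambda>t. Dk a (Suc k) q t - (t - a) ^ Suc k * Cst) has_real_derivative
         (real (Suc k) * Dk a k q t - real (Suc k) * (t - a) ^ k * Cst)) (at t within {a..b})"
    by (rule Deriv.field_differentiable_diff[OF d1 d2])
  moreover have "g j = (\<lambda>t. Dk a (Suc k) q t - (t - a) ^ Suc k * Cst)" unfolding g_def using j pj by simp
  moreover have "cc j * g (Suc j) t = real (Suc k) * Dk a k q t - real (Suc k) * (t - a) ^ k * Cst"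
    unfolding g_def cc_def using True pj psj by (simp add: algebra_simps)
  ultimately show ?thesis by simp
next
  case False
  hence jp: "j = p" using j by simp
  note d1 = Dk0_deriv[OF q_cont t]
  have "((\<lambda>t. Dk a 0 q t - Cst) has_real_derivative q t) (at t within {a..b})"
    using Deriv.field_differentiable_diff[OF d1 DERIV_const[of Cst]] by simp
  moreover have "g j = (\<lambda>t. Dk a 0 q t - Cst)" unfolding g_def using jp by simp
  moreover have "cc j * g (Suc j) t = q t" unfolding g_def cc_def using jp q_qd[OF t] by simp
  ultimately show ?thesis by simp
qed

lemma g_cont: assumes j: "j \<le> 2 * p - 1" shows "continuous_on {a..b} (g j)"
proof (cases "j \<le> p")
  case True
  show ?thesis by (rule DERIV_continuous_on[OF g_deriv[OF True]])
next
  case False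
  hence "g j = qd (j - p - 1)" unfolding g_def by simp
  moreover have "j - p - 1 < p - 1" using False j p2 by linarith
  ultimately show ?thesis using qd_cont by simp
qed

lemma g_Rel: assumes j: "j < 2 * p - 1" shows "Rel (g j) (g (Suc j)) (cc j) a b"
proof (cases "j \<le> p")
  case True
  show ?thesis by (rule Rel_from_deriv) (use g_deriv[OF True] in auto)
next
  case False
  have e1: "g j = qd (j - p - 1)" unfolding g_def using False by simp
  have e2: "g (Suc j) = qd (Suc (j - p - 1))" unfolding g_def using False by (simp add: Suc_diff_Suc)
  have "Suc (j - p - 1) < p - 1" using False j by linarith
  hence "Rel (qd (j - p - 1)) (qd (Suc (j - p - 1))) 1 a b" by (rule qd_Rel)
  moreover have "cc j = 1" unfolding cc_def using False by simp
  ultimately show ?thesis using e1 e2 by simp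
qed

lemma g_a: assumes j: "j < p" shows "g j a = 0"
  unfolding g_def Dk_def using j by simp

lemma g_Sp: "g (Suc p) = qd 0" unfolding g_def by simp
lemma g_last: "g (2 * p - 1) = qd (p - 2)"
proof -
  have "\<not> (2 * p - 1 \<le> p)" "2 * p - 1 - p - 1 = p - 2" using p2 by auto
  thus ?thesis unfolding g_def by simp
qed

end

context qsp begin

lemma vt_inner:
  assumes i: "i \<le> N"
  shows "l2_inner a b (vt i) q = g 0 (xk i)"
proof -
  define t where "t = xk i"
  have t: "t \<in> {a..b}" using xk_range[OF i] unfolding t_def .
  define C where "C = ((t - a) / (b - a)) ^ p"
  note qc = q_cont
  have c1: "continuous_on {a..b} (\<lambda>x. (max (t - x) 0) ^ p * q x)"
    by (intro continuous_intros qc)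
  have c2: "continuous_on {a..b} (\<lambda>x. (b - x) ^ p * q x)"
    by (intro continuous_intros qc)
  have "l2_inner a b (vt i) q = integral {a..b} (\<lambda>x. (max (t - x) 0) ^ p * q x - C * ((b - x) ^ p * q x))"
    unfolding l2_inner_def vt_def t_def C_def by (rule integral_cong) (simp add: algebra_simps)
  also have "\<dots> = integral {a..b} (\<lambda>x. (max (t - x) 0) ^ p * q x) - integral {a..b} (\<lambda>x. C * ((b - x) ^ p * q x))"
    by (rule integral_diff) (auto intro!: integrable_continuous_interval c1 int_cmul c2)
  also have "integral {a..b} (\<lambda>x. C * ((b - x) ^ p * q x)) = C * Dk a p q b"
    unfolding Dk_def by simp
  also have "integral {a..b} (\<lambda>x. (max (t - x) 0) ^ p * q x)
      = integral {a..t} (\<lambda>x. (max (t - x) 0) ^ p * q x) + integral {t..b} (\<lambda>x. (max (t - x) 0) ^ p * q x)"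
    by (rule Henstock_Kurzweil_Integration.integral_combine[symmetric]) (use t c1 in \<open>auto intro: integrable_continuous_interval\<close>)
  also have "integral {a..t} (\<lambda>x. (max (t - x) 0) ^ p * q x) = Dk a p q t"
    unfolding Dk_def by (rule integral_cong) auto
  also have "integral {t..b} (\<lambda>x. (max (t - x) 0) ^ p * q x) = integral {t..b} (\<lambda>x. 0)"
    by (rule integral_cong) (use p2 in auto)
  also have "C * Dk a p q b = (t - a) ^ p * Cst"
    unfolding C_def Cst_def by (simp add: power_divide)
  finally show ?thesis unfolding g_def t_def by simp
qed

lemma g0_xk: "i \<le> N \<Longrightarrow> l2_inner a b (vt i) q = 0 \<Longrightarrow> g 0 (xk i) = 0"
  using vt_inner by simp

lemma wt_inner:
  shows "l2_inner a b (wt k) q = (b - a) ^ (p - k) * Dk a k q b - Dk a p q b"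
proof -
  note qc = q_cont
  have c1: "continuous_on {a..b} (\<lambda>x. (b - x) ^ k * q x)" by (intro continuous_intros qc)
  have c2: "continuous_on {a..b} (\<lambda>x. (b - x) ^ p * q x)" by (intro continuous_intros qc)
  have "l2_inner a b (wt k) q = integral {a..b} (\<lambda>x. (b - a) ^ (p - k) * ((b - x) ^ k * q x) - (b - x) ^ p * q x)"
    unfolding l2_inner_def wt_def by (rule integral_cong) (simp add: algebra_simps)
  also have "\<dots> = integral {a..b} (\<lambda>x. (b - a) ^ (p - k) * ((b - x) ^ k * q x)) - integral {a..b} (\<lambda>x. (b - x) ^ p * q x)"
    by (rule integral_diff) (auto intro!: integrable_continuous_interval c1 int_cmul c2)
  finally show ?thesis unfolding Dk_def by simp
qed

lemma g_b:
  assumes j: "1 \<le> j" "j < p" and o: "l2_inner a b (wt (p - j)) q = 0"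
  shows "g j b = 0"
proof -
  define k where "k = p - j"
  have kp: "k \<le> p" "p - k = j" using j unfolding k_def by auto
  have e: "Dk a p q b = (b - a) ^ j * Dk a k q b" using o wt_inner[of k] kp unfolding k_def by simp
  have "p = k + j" using kp by simp
  hence bp: "(b - a) ^ p = (b - a) ^ k * (b - a) ^ j" by (simp add: power_add)
  have nz: "(b - a) ^ k \<noteq> 0" "(b - a) ^ j \<noteq> 0" using ab by auto
  have "g j b = Dk a k q b - (b - a) ^ k * Cst" unfolding g_def k_def using j by simp
  also have "(b - a) ^ k * Cst = Dk a k q b"
  proof -
    have nz2: "(b - a) ^ k * (b - a) ^ j \<noteq> 0" using nz by simp
    have "(b - a) ^ k * Cst = ((b - a) ^ k * (b - a) ^ j) * Dk a k q b / ((b - a) ^ k * (b - a) ^ j)"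
      unfolding Cst_def e bp by (simp add: ac_simps)
    also have "\<dots> = Dk a k q b" using nz2 by simp
    finally show ?thesis .
  qed
  finally show ?thesis by simp
qed

end

lemma Rel_zero_on:
  assumes R: "Rel G G' c a b" and uv: "a \<le> u" "u \<le> v" "v \<le> b"
    and z: "\<forall>x\<in>{u..v}. G' x = 0" and x0: "x0 \<in> {u..v}" "G x0 = 0"
  shows "\<forall>x\<in>{u..v}. G x = 0"
proof
  fix x assume x: "x \<in> {u..v}"
  show "G x = 0"
  proof (cases "x0 \<le> x")
    case True
    have "G x = G x0" by (rule Rel_const[OF R]) (use uv x x0 True z in auto)
    thus ?thesis using x0 by simp
  next
    case False
    have "G x0 = G x" by (rule Rel_const[OF R]) (use uv x x0 False z in auto)
    thus ?thesis using x0 by simp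
  qed
qed

context qsp begin

definition "Zk k \<longleftrightarrow> (\<exists>j. k * 2 ^ L \<le> j \<and> j < Suc k * 2 ^ L \<and> (\<forall>x\<in>{xk j<..<xk (Suc j)}. g 0 x = 0))"

lemma Zk_imp:
  assumes k: "k < M" and Z: "Zk k"
  shows "P k = 0 \<and> (\<forall>j\<le>p. \<forall>x\<in>{yk k..yk (Suc k)}. g j x = 0)"
proof -
  obtain j where j1: "k * 2 ^ L \<le> j" and j2: "j < Suc k * 2 ^ L" and z0: "\<forall>x\<in>{xk j<..<xk (Suc j)}. g 0 x = 0"
    using Z unfolding Zk_def by blast
  have e1: "yk k \<le> xk j" using xk_mono[OF j1] yk_xk by simp
  have e2: "xk (Suc j) \<le> yk (Suc k)" using xk_mono[of "Suc j" "Suc k * 2 ^ L"] j2 yk_xk by simp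
  have kM: "Suc k \<le> M" using k by simp
  have ya: "a \<le> yk k" using yk_range[of k] k by simp
  have yb: "yk (Suc k) \<le> b" using yk_range[OF kM] by simp
  have xjs: "xk j < xk (Suc j)" by (rule xk_smono) simp
  have fw: "\<forall>x\<in>{xk j<..<xk (Suc j)}. g m x = 0" if "m \<le> Suc p" for m
    using that
  proof (induction m)
    case 0 thus ?case using z0 by simp
  next
    case (Suc m)
    have mlt: "m < 2 * p - 1" using Suc.prems p2 by linarith
    have cont: "continuous_on {a..b} (g (Suc m))" by (rule g_cont) (use mlt in simp)
    show ?case
    proof
      fix x assume x: "x \<in> {xk j<..<xk (Suc j)}"
      show "g (Suc m) x = 0"
        by (rule Rel_zero_deriv[OF g_Rel[OF mlt] cc_pos cont _ _ _ x]) (use Suc e1 e2 ya yb in auto)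
    qed
  qed
  have "\<forall>x\<in>{xk j<..<xk (Suc j)}. poly (P k) x = 0"
  proof
    fix x assume x: "x \<in> {xk j<..<xk (Suc j)}"
    have xE: "x \<in> {yk k..yk (Suc k)}" using x e1 e2 by auto
    have "g (Suc p) x = 0" using fw[of "Suc p"] x by simp
    thus "poly (P k) x = 0" using qd_piece[OF k xE, of 0] p2 g_Sp by simp
  qed
  hence Pk: "P k = 0"
  proof -
    assume r: "\<forall>x\<in>{xk j<..<xk (Suc j)}. poly (P k) x = 0"
    show "P k = 0"
    proof (rule ccontr)
      assume "P k \<noteq> 0"
      hence "finite {x. poly (P k) x = 0}" by (rule poly_roots_finite)
      moreover have "{xk j<..<xk (Suc j)} \<subseteq> {x. poly (P k) x = 0}" using r by auto
      ultimately have "finite {xk j<..<xk (Suc j)}" by (rule finite_subset[rotated])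
      thus False using xjs infinite_Ioo by blast
    qed
  qed
  define x0 where "x0 = (xk j + xk (Suc j)) / 2"
  have x0e: "x0 \<in> {xk j<..<xk (Suc j)}" unfolding x0_def using xjs by auto
  have x0E: "x0 \<in> {yk k..yk (Suc k)}" using x0e e1 e2 by auto
  have bw: "\<forall>x\<in>{yk k..yk (Suc k)}. g (p - m) x = 0" if "m \<le> p" for m
    using that
  proof (induction m)
    case 0
    have z: "\<forall>x\<in>{yk k..yk (Suc k)}. g (Suc p) x = 0"
      using qd_piece[OF k _, of _ 0] p2 g_Sp Pk by simp
    have "p < 2 * p - 1" using p2 by simp
    from Rel_zero_on[OF g_Rel[OF this] ya _ yb z x0E] fw[of p] x0e
    show ?case using yk_mono[of k "Suc k"] by simp
  next
    case (Suc m)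
    have pm: "Suc (p - Suc m) = p - m" using Suc.prems by simp
    have lt: "p - Suc m < 2 * p - 1" using p2 by simp
    have z: "\<forall>x\<in>{yk k..yk (Suc k)}. g (Suc (p - Suc m)) x = 0" using Suc pm by simp
    have "g (p - Suc m) x0 = 0" using fw[of "p - Suc m"] x0e by simp
    from Rel_zero_on[OF g_Rel[OF lt] ya _ yb z x0E this]
    show ?case using yk_mono[of k "Suc k"] by simp
  qed
  have "\<forall>j'\<le>p. \<forall>x\<in>{yk k..yk (Suc k)}. g j' x = 0"
  proof (intro allI impI)
    fix j' assume "j' \<le> p"
    hence "j' = p - (p - j')" "p - j' \<le> p" by auto
    thus "\<forall>x\<in>{yk k..yk (Suc k)}. g j' x = 0" using bw[of "p - j'"] by metis
  qed
  thus ?thesis using Pk by simp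
qed

end

lemma degree_pderiv_iter: fixes P :: "real poly" shows "degree ((pderiv ^^ n) P) \<le> degree P - n"
proof (induction n)
  case 0 thus ?case by simp
next
  case (Suc n)
  have "degree ((pderiv ^^ Suc n) P) = degree (pderiv ((pderiv ^^ n) P))" by simp
  also have "\<dots> = degree ((pderiv ^^ n) P) - 1" by (rule degree_pderiv)
  finally show ?case using Suc by simp
qed

context qsp begin

lemma yk_shift: "mesh_pt (yk k1) Hc k = yk (k1 + k)"
  unfolding yk_def mesh_pt_def by (simp add: algebra_simps)

theorem inj_main:
  assumes o1: "\<forall>i\<le>N. l2_inner a b (vt i) q = 0"
    and o2: "\<forall>k. 1 \<le> k \<and> k < p \<longrightarrow> l2_inner a b (wt k) q = 0"
  shows "\<forall>k<M. P k = 0"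
proof (rule ccontr)
  assume "\<not> ?thesis"
  then obtain k0 where k0: "k0 < M" "P k0 \<noteq> 0" by blast
  have nZ0: "\<not> Zk k0" using Zk_imp[OF k0(1)] k0(2) by blast
  define Q1 where "Q1 k \<longleftrightarrow> k \<le> k0 \<and> (\<forall>k'. k \<le> k' \<and> k' \<le> k0 \<longrightarrow> \<not> Zk k')" for k
  define k1 where "k1 = (LEAST k. Q1 k)"
  have Q1k0: "Q1 k0" unfolding Q1_def using nZ0 by (auto dest: antisym)
  have Q1k1: "Q1 k1" unfolding k1_def by (rule LeastI[of Q1, OF Q1k0])
  have k1le: "k1 \<le> k0" using Q1k1 unfolding Q1_def by simp
  have k1b: "k1 = 0 \<or> Zk (k1 - 1)"
  proof (rule ccontr)
    assume A: "\<not> (k1 = 0 \<or> Zk (k1 - 1))"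
    have "Q1 (k1 - 1)" unfolding Q1_def
    proof (intro conjI allI impI)
      show "k1 - 1 \<le> k0" using k1le by simp
      fix k' assume k': "k1 - 1 \<le> k' \<and> k' \<le> k0"
      show "\<not> Zk k'"
      proof (cases "k' = k1 - 1")
        case True thus ?thesis using A by simp
      next
        case False
        hence "k1 \<le> k'" using k' A by linarith
        thus ?thesis using Q1k1 k' unfolding Q1_def by simp
      qed
    qed
    hence "k1 \<le> k1 - 1" unfolding k1_def by (rule Least_le)
    moreover have "k1 > 0" using A by simp
    ultimately show False by linarith
  qed
  define Q2 where "Q2 k \<longleftrightarrow> k0 < k \<and> (k = M \<or> Zk k)" for k
  define k2 where "k2 = (LEAST k. Q2 k)"
  have Q2M: "Q2 M" unfolding Q2_def using k0 by simp
  have Q2k2: "Q2 k2" unfolding k2_def by (rule LeastI[of Q2, OF Q2M])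
  have k2M: "k2 \<le> M" unfolding k2_def by (rule Least_le[of Q2, OF Q2M])
  have k2b: "k2 = M \<or> Zk k2" using Q2k2 unfolding Q2_def by simp
  have k0k2: "k0 < k2" using Q2k2 unfolding Q2_def by simp
  have nZ: "\<not> Zk k \<and> k < M" if "k1 \<le> k" "k < k2" for k
  proof (cases "k \<le> k0")
    case True thus ?thesis using Q1k1 that k0 unfolding Q1_def by simp
  next
    case False
    have "\<not> Q2 k" unfolding k2_def using that(2) not_less_Least k2_def by blast
    thus ?thesis using False k2M that unfolding Q2_def by auto
  qed
  define c where "c = k2 - k1"
  have c1: "c \<ge> 1" unfolding c_def using k1le k0k2 by simp
  define r where "r = 2 ^ L * c"
  have r1: "r \<ge> 1" unfolding r_def using c1 by simp
  have m12: "k1 * 2 ^ L \<le> k2 * 2 ^ L" using k1le k0k2 by simp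
  have req: "r = k2 * 2 ^ L - k1 * 2 ^ L" unfolding r_def c_def by (simp add: diff_mult_distrib mult.commute)
  define \<alpha> where "\<alpha> = yk k1"
  define \<beta> where "\<beta> = yk k2"
  define X where "X i = xk (k1 * 2 ^ L + i)" for i
  have X0: "\<alpha> = X 0" unfolding X_def \<alpha>_def yk_xk by simp
  have "k1 * 2 ^ L + r = k2 * 2 ^ L" using m12 req by linarith
  hence Xr: "\<beta> = X r" unfolding X_def \<beta>_def yk_xk by simp
  have \<alpha>a: "a \<le> \<alpha>" using yk_range[of k1] k1le k0 unfolding \<alpha>_def by simp
  have \<beta>b: "\<beta> \<le> b" using yk_range[OF k2M] unfolding \<beta>_def by simp
  have \<alpha>\<beta>: "\<alpha> \<le> \<beta>" unfolding \<alpha>_def \<beta>_def using k1le k0k2 by (intro yk_mono) simp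
  have \<beta>eq: "\<beta> = \<alpha> + real c * Hc" unfolding \<alpha>_def \<beta>_def c_def yk_def mesh_pt_def using k1le k0k2
    by (simp add: of_nat_diff algebra_simps)
  have N2: "k2 * 2 ^ L \<le> N" using k2M N_eq by (metis mult.commute mult_le_mono1)
  have Rsub: "Rel (g j) (g (Suc j)) (cc j) \<alpha> \<beta>" if "j < 2 * p - 1" for j
    by (rule Rel_sub[OF g_Rel[OF that] \<alpha>a \<beta>b])
  have csub: "continuous_on {\<alpha>..\<beta>} (g j)" if "j \<le> 2 * p - 1" for j
    by (rule continuous_on_subset[OF g_cont[OF that]]) (use \<alpha>a \<beta>b in auto)
  have ga: "g j \<alpha> = 0" if "1 \<le> j" "j < p" for j
  proof (cases "k1 = 0")
    case True thus ?thesis using g_a[OF that(2)] yk0 unfolding \<alpha>_def by simp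
  next
    case False
    hence Z: "Zk (k1 - 1)" using k1b by simp
    have lt: "k1 - 1 < M" using k1le k0 by simp
    have "\<alpha> \<in> {yk (k1 - 1)..yk (Suc (k1 - 1))}" unfolding \<alpha>_def using False yk_mono[of "k1 - 1" k1] by simp
    thus ?thesis using Zk_imp[OF lt Z] that by simp
  qed
  have gb: "g j \<beta> = 0" if "1 \<le> j" "j < p" for j
  proof (cases "k2 = M")
    case True
    have "l2_inner a b (wt (p - j)) q = 0" using o2 that by simp
    thus ?thesis using g_b[OF that] ykM True unfolding \<beta>_def by simp
  next
    case False
    hence Z: "Zk k2" and lt: "k2 < M" using k2b k2M by auto
    have "\<beta> \<in> {yk k2..yk (Suc k2)}" unfolding \<beta>_def using yk_mono[of k2 "Suc k2"] by simp
    thus ?thesis using Zk_imp[OF lt Z] that by simp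
  qed
  have start: "alt (g 1) \<alpha> \<beta> (Suc r)"
  proof (rule alt_start[OF r1 _ X0 Xr _ _ _ cc_pos csub])
    show "\<forall>i<r. X i < X (Suc i)" unfolding X_def by (auto intro: xk_smono)
    show "\<forall>i\<le>r. g 0 (X i) = 0"
    proof (intro allI impI)
      fix i assume i: "i \<le> r"
      have "k1 * 2 ^ L + i \<le> k2 * 2 ^ L" using i m12 req by linarith
      hence "k1 * 2 ^ L + i \<le> N" using N2 by simp
      thus "g 0 (X i) = 0" unfolding X_def using g0_xk o1 by simp
    qed
    show "\<forall>i<r. \<exists>s\<in>{X i<..<X (Suc i)}. g 0 s \<noteq> 0"
    proof (intro allI impI)
      fix i assume i: "i < r"
      define j where "j = k1 * 2 ^ L + i"
      define kk where "kk = j div 2 ^ L"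
      have "kk * 2 ^ L \<le> j" unfolding kk_def by (metis div_mult_mod_eq le_add1)
      moreover have "j < Suc kk * 2 ^ L" unfolding kk_def
        by (metis div_mult_mod_eq mod_less_divisor mult_Suc zero_less_numeral zero_less_power add.commute add_less_cancel_left)
      moreover have "k1 \<le> kk" unfolding kk_def j_def by simp
      moreover have "kk < k2"
      proof -
        have "j < k2 * 2 ^ L" unfolding j_def using i m12 req by linarith
        thus ?thesis unfolding kk_def by (simp add: div_less_iff_less_mult)
      qed
      ultimately have "\<not> (\<forall>x\<in>{xk j<..<xk (Suc j)}. g 0 x = 0)" using nZ[of kk] unfolding Zk_def by blast
      thus "\<exists>s\<in>{X i<..<X (Suc i)}. g 0 s \<noteq> 0" unfolding X_def j_def by auto
    qed
    show "Rel (g 0) (g 1) (cc 0) \<alpha> \<beta>" using Rsub[of 0] p2 by simp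
    show "1 \<le> 2 * p - 1" using p2 by simp
  qed
  have up: "alt (g (Suc m)) \<alpha> \<beta> (Suc r + m)" if "m \<le> p - 1" for m
    using that
  proof (induction m)
    case 0 thus ?case using start by simp
  next
    case (Suc m)
    have lt: "Suc m < 2 * p - 1" using Suc.prems p2 by linarith
    have le: "Suc (Suc m) \<le> 2 * p - 1" using Suc.prems p2 by linarith
    have "alt (g (Suc (Suc m))) \<alpha> \<beta> (Suc (Suc r + m))"
      by (rule alt_step_ends[OF Suc.IH[OF _] _ Rsub[OF lt] cc_pos csub[OF le] ga gb])
         (use Suc.prems in auto)
    thus ?case by simp
  qed
  have down: "alt (g (p + m)) \<alpha> \<beta> (Suc r + (p - 1) - m)" if "m \<le> p - 1" for m
    using that
  proof (induction m)
    case 0 thus ?case using up[of "p - 1"] p2 by simp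
  next
    case (Suc m)
    have lt: "p + m < 2 * p - 1" using Suc.prems p2 by linarith
    have le: "Suc (p + m) \<le> 2 * p - 1" using Suc.prems p2 by linarith
    have "alt (g (Suc (p + m))) \<alpha> \<beta> (Suc r + (p - 1) - m - 1)"
      by (rule alt_step_plain[OF Suc.IH Rsub[OF lt] cc_pos csub[OF le]]) (use Suc.prems in auto)
    thus ?case by simp
  qed
  have fin: "alt (qd (p - 2)) \<alpha> (\<alpha> + real c * Hc) (Suc r)"
  proof -
    have "alt (g (p + (p - 1))) \<alpha> \<beta> (Suc r + (p - 1) - (p - 1))" by (rule down) simp
    moreover have "p + (p - 1) = 2 * p - 1" using p2 by simp
    ultimately show ?thesis using g_last \<beta>eq by simp
  qed
  have bound: "Suc r \<le> Suc c"
  proof (rule alt_bound_linear[OF Hc_pos c1 _ _ fin])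
    have le: "2 * p - 1 \<le> 2 * p - 1" by simp
    show "continuous_on {\<alpha>..\<alpha> + real c * Hc} (qd (p - 2))" using csub[OF le] g_last \<beta>eq by simp
    show "\<forall>k<c. \<exists>Pp. degree Pp \<le> 1 \<and> (\<forall>x\<in>{mesh_pt \<alpha> Hc k..mesh_pt \<alpha> Hc (Suc k)}. qd (p - 2) x = poly Pp x)"
    proof (intro allI impI)
      fix k assume k: "k < c"
      have kM: "k1 + k < M" using k nZ[of "k1 + k"] unfolding c_def by simp
      have "degree ((pderiv ^^ (p - 2)) (P (k1 + k))) \<le> degree (P (k1 + k)) - (p - 2)"
        by (rule degree_pderiv_iter)
      also have "\<dots> \<le> 1"
      proof -
        have "degree (P (k1 + k)) \<le> p - 1" using Pdeg kM by simp
        thus ?thesis using p2 by linarith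
      qed
      finally have dg: "degree ((pderiv ^^ (p - 2)) (P (k1 + k))) \<le> 1" .
      have pl: "p - 2 < p - 1" using p2 by simp
      show "\<exists>Pp. degree Pp \<le> 1 \<and> (\<forall>x\<in>{mesh_pt \<alpha> Hc k..mesh_pt \<alpha> Hc (Suc k)}. qd (p - 2) x = poly Pp x)"
        using dg qd_piece[OF kM _ pl] unfolding \<alpha>_def yk_shift by (intro exI[of _ "(pderiv ^^ (p - 2)) (P (k1 + k))"]) auto
    qed
  qed
  have "2 ^ L \<ge> (2::nat)" using L1 by (metis power_one_right power_increasing one_le_numeral)
  hence "r \<ge> 2 * c" unfolding r_def by simp
  thus False using bound c1 by simp
qed

end

lemma pderiv_iter_diff: "(pderiv ^^ k) (A - B) = (pderiv ^^ k) A - (pderiv ^^ k) (B :: real poly)"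
  by (induction k) (auto simp: pderiv_diff)

lemma pderiv_iter_minus: "(pderiv ^^ k) (- A) = - (pderiv ^^ k) (A :: real poly)"
  by (induction k) (auto simp: pderiv_minus)

lemma pderiv_iter_smult: "(pderiv ^^ k) (smult c A) = smult c ((pderiv ^^ k) (A :: real poly))"
  by (induction k) (auto simp: pderiv_smult)

lemma pderiv_iter_lin_power:
  "k \<le> n \<Longrightarrow> \<exists>c. (pderiv ^^ k) ([:t, -1:] ^ n) = smult c ([:t, -1::real:] ^ (n - k))"
proof (induction k)
  case 0 thus ?case by (intro exI[of _ 1]) simp
next
  case (Suc k)
  then obtain c where c: "(pderiv ^^ k) ([:t, -1:] ^ n) = smult c ([:t, -1::real:] ^ (n - k))" by auto
  define m where "m = n - Suc k"
  have nk: "n - k = Suc m" unfolding m_def using Suc.prems by simp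
  have "(pderiv ^^ Suc k) ([:t, -1:] ^ n) = pderiv (smult c ([:t, -1::real:] ^ Suc m))" using c nk by simp
  also have "\<dots> = smult (c * real (Suc m) * (-1)) ([:t, -1::real:] ^ m)"
  proof -
    have e: "pderiv ([:t, -1::real:] ^ Suc m) = smult (of_nat (Suc m)) ([:t, -1:] ^ m) * pderiv [:t, -1:]"
      by (rule pderiv_power_Suc)
    have e2: "pderiv [:t, -1::real:] = [:-1:]" by (simp add: pderiv_pCons)
    show ?thesis by (simp only: pderiv_smult e e2) (simp del: power_Suc add: algebra_simps flip: smult_minus_left)
  qed
  finally show ?case unfolding m_def by blast
qed

lemma poly_lin_power_deriv_zero:
  "k < n \<Longrightarrow> poly ((pderiv ^^ k) ([:t, -1:] ^ n)) (t::real) = 0"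
  using pderiv_iter_lin_power[of k n t] by (auto simp: poly_power)

lemma poly_lin_power: "poly ([:t, -1:] ^ n) x = (t - x) ^ n" for t x :: real
  by (simp add: poly_power)

lemma degree_lin_power: "degree ([:t, -1::real:] ^ n) \<le> n"
  using degree_power_le[of "[:t, -1::real:]" n] by simp

lemma spline_uminus:
  assumes f: "f \<in> spline_space a H M p"
  shows "(\<lambda>x. - f x) \<in> spline_space a H M p"
proof -
  obtain P where P1: "\<forall>i<M. degree (P i) \<le> p \<and> (\<forall>x \<in> {mesh_pt a H i .. mesh_pt a H (Suc i)}. f x = poly (P i) x)"
    and P2: "\<forall>i. Suc i < M \<longrightarrow> (\<forall>k<p. poly ((pderiv ^^ k) (P i)) (mesh_pt a H (Suc i)) =
                    poly ((pderiv ^^ k) (P (Suc i))) (mesh_pt a H (Suc i)))"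
    using f unfolding spline_space_def by blast
  show ?thesis unfolding spline_space_def
    by (rule CollectI, rule exI[of _ "\<lambda>i. - P i"]) (use P1 P2 in \<open>auto simp: pderiv_iter_minus\<close>)
qed

context sp begin

lemma V_uminus: "f \<in> V_h a b N p \<Longrightarrow> (\<lambda>x. - f x) \<in> V_h a b N p"
  unfolding V_h_def using spline_uminus by auto

lemma h_eq: "(b - a) / real N = h" unfolding h_def by simp

lemma vt_V: assumes i: "i \<le> N" shows "vt i \<in> V_h a b N p"
proof -
  define t where "t = xk i"
  define C where "C = ((t - a) / (b - a)) ^ p"
  define PP where "PP j = (if j < i then [:t, -1:] ^ p - smult C ([:b, -1:] ^ p) else - smult C ([:b, -1:] ^ p))" for j
  have p1: "p \<ge> 1" using p2 by simp
  have sp: "vt i \<in> spline_space a h N p" unfolding spline_space_def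
  proof (rule CollectI, rule exI[of _ PP], intro conjI allI impI ballI)
    fix j assume j: "j < N"
    show "degree (PP j) \<le> p" unfolding PP_def
      using degree_lin_power[of t p] degree_lin_power[of b p]
      by (auto intro!: degree_diff_le order.trans[OF degree_smult_le])
    fix x assume x: "x \<in> {mesh_pt a h j..mesh_pt a h (Suc j)}"
    show "vt i x = poly (PP j) x"
    proof (cases "j < i")
      case True
      have "x \<le> t" using x xk_mono[of "Suc j" i] True unfolding t_def xk_def by auto
      thus ?thesis unfolding vt_def PP_def using True by (simp add: poly_lin_power t_def C_def)
    next
      case False
      have "t \<le> x" using x xk_mono[of i j] False unfolding t_def xk_def by auto
      hence "max (t - x) 0 = 0" by simp
      thus ?thesis unfolding vt_def PP_def using False p1 by (simp add: poly_lin_power t_def C_def)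
    qed
  next
    fix j k assume j: "Suc j < N" and k: "k < p"
    show "poly ((pderiv ^^ k) (PP j)) (mesh_pt a h (Suc j)) = poly ((pderiv ^^ k) (PP (Suc j))) (mesh_pt a h (Suc j))"
    proof (cases "Suc j = i")
      case True
      have "mesh_pt a h (Suc j) = t" unfolding t_def xk_def using True by simp
      thus ?thesis unfolding PP_def using True poly_lin_power_deriv_zero[OF k, of t]
        by (simp add: pderiv_iter_diff pderiv_iter_minus)
    next
      case False
      hence "(j < i) = (Suc j < i)" by auto
      thus ?thesis unfolding PP_def by simp
    qed
  qed
  have t: "t \<in> {a..b}" using xk_range[OF i] unfolding t_def .
  have va: "vt i a = 0"
  proof -
    have "C * (b - a) ^ p = (t - a) ^ p" unfolding C_def using ab by (simp add: power_divide)
    thus ?thesis unfolding vt_def t_def[symmetric] C_def[symmetric] using t by simp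
  qed
  have vb: "vt i b = 0" unfolding vt_def using t p1 unfolding t_def[symmetric] by simp
  show ?thesis unfolding V_h_def h_eq using sp va vb by simp
qed

lemma wt_V: assumes k: "k \<le> p" "1 \<le> k" shows "wt k \<in> V_h a b N p"
proof -
  define W where "W = smult ((b - a) ^ (p - k)) ([:b, -1:] ^ k) - [:b, -1::real:] ^ p"
  have sp: "wt k \<in> spline_space a h N p" unfolding spline_space_def
  proof (rule CollectI, rule exI[of _ "\<lambda>_. W"], intro conjI allI impI ballI)
    fix j assume j: "j < N"
    show "degree W \<le> p" unfolding W_def
      using degree_lin_power[of b k] degree_lin_power[of b p] k
      by (auto intro!: degree_diff_le order.trans[OF degree_smult_le])
    fix x show "wt k x = poly W x" unfolding wt_def W_def by (simp add: poly_lin_power)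
  qed simp
  have "(b - a) ^ (p - k) * (b - a) ^ k = (b - a) ^ p" using k by (simp add: power_add[symmetric])
  hence wa: "wt k a = 0" unfolding wt_def by simp
  have wb: "wt k b = 0" unfolding wt_def using k p2 by (simp add: power_0_left)
  show ?thesis unfolding V_h_def h_eq using sp wa wb by simp
qed

end

lemma compact_box_fun: "compact {c :: 'i \<Rightarrow> real. \<forall>i. c i \<in> {-1..1}}"
proof -
  have "compactin (product_topology (\<lambda>i. euclidean) UNIV) (PiE UNIV (\<lambda>i::'i. {-1..1::real}))"
    by (subst compactin_PiE) auto
  hence "compactin euclidean (PiE UNIV (\<lambda>i::'i. {-1..1::real}))"
    by (simp add: euclidean_product_topology)
  hence "compact (PiE UNIV (\<lambda>i::'i. {-1..1::real}))" by simp
  moreover have "PiE UNIV (\<lambda>i::'i. {-1..1::real}) = {c. \<forall>i. c i \<in> {-1..1}}"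
    by (auto simp: PiE_UNIV_domain Pi_def)
  ultimately show ?thesis by simp
qed

lemma cont_coord_sum_abs: "finite A \<Longrightarrow> continuous_on UNIV (\<lambda>c :: 'i \<Rightarrow> real. \<Sum>i\<in>A. \<bar>c i\<bar>)"
  by (intro continuous_intros continuous_on_product_then_coordinatewise[OF continuous_on_id])

lemma compact_lower_bound:
  fixes F :: "('i \<Rightarrow> real) \<Rightarrow> real" and K :: "('i \<Rightarrow> real) set" and A :: "'i set"
  assumes A: "finite A" and K: "closed K" and Fc: "continuous_on UNIV F" and F0: "\<And>c. F c \<ge> 0"
    and Fh: "\<And>c t. t > 0 \<Longrightarrow> F (\<lambda>i. t * c i) = t * F c"
    and Kh: "\<And>c t. c \<in> K \<Longrightarrow> t > 0 \<Longrightarrow> (\<lambda>i. t * c i) \<in> K"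
    and Ks: "\<And>c i. c \<in> K \<Longrightarrow> i \<notin> A \<Longrightarrow> c i = 0"
    and Fp: "\<And>c. c \<in> K \<Longrightarrow> (\<Sum>i\<in>A. \<bar>c i\<bar>) > 0 \<Longrightarrow> F c > 0"
  shows "\<exists>\<beta>>0. \<forall>c\<in>K. F c \<ge> \<beta> * (\<Sum>i\<in>A. \<bar>c i\<bar>)"
proof -
  define S where "S c = (\<Sum>i\<in>A. \<bar>c i\<bar>)" for c :: "'i \<Rightarrow> real"
  define Sph where "Sph = K \<inter> {c. S c = 1}"
  have Sc: "continuous_on UNIV S" unfolding S_def by (rule cont_coord_sum_abs[OF A])
  have "closed {c. S c = 1}" by (rule closed_Collect_eq[OF Sc continuous_on_const])
  hence clS: "closed Sph" unfolding Sph_def using K by auto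
  have sub: "Sph \<subseteq> {c. \<forall>i. c i \<in> {-1..1}}"
  proof
    fix c assume c: "c \<in> Sph"
    have "\<bar>c i\<bar> \<le> 1" for i
    proof (cases "i \<in> A")
      case True
      have "\<bar>c i\<bar> \<le> S c" unfolding S_def by (rule member_le_sum[OF True _ A]) auto
      thus ?thesis using c unfolding Sph_def by simp
    next
      case False
      have "c \<in> K" using c unfolding Sph_def by simp
      hence "c i = 0" using Ks False by blast
      thus ?thesis by simp
    qed
    thus "c \<in> {c. \<forall>i. c i \<in> {-1..1}}" by (auto simp: abs_le_iff)
  qed
  have cpt: "compact Sph"
  proof -
    have "compact ({c. \<forall>i. c i \<in> {-1..1}} \<inter> Sph)" by (rule compact_Int_closed[OF compact_box_fun clS])
    moreover have "{c. \<forall>i. c i \<in> {-1..(1::real)}} \<inter> Sph = Sph" using sub by blast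
    ultimately show ?thesis by simp
  qed
  have Sscale: "S (\<lambda>i. t * c i) = t * S c" if "t > 0" for t c
    unfolding S_def using that by (simp add: abs_mult sum_distrib_left)
  show ?thesis
  proof (cases "Sph = {}")
    case True
    show ?thesis
    proof (intro exI[of _ 1] conjI ballI)
      fix c assume c: "c \<in> K"
      have "S c = 0"
      proof (rule ccontr)
        assume "S c \<noteq> 0"
        hence sp: "S c > 0" unfolding S_def by (simp add: sum_nonneg order_le_neq_trans)
        have k1: "(\<lambda>i. (1 / S c) * c i) \<in> K" by (rule Kh[OF c]) (use sp in simp)
        have k2: "S (\<lambda>i. (1 / S c) * c i) = 1" using Sscale[of "1 / S c" c] sp by simp
        have "(\<lambda>i. (1 / S c) * c i) \<in> Sph" unfolding Sph_def using k1 k2 by blast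
        thus False using True by simp
      qed
      thus "1 * (\<Sum>i\<in>A. \<bar>c i\<bar>) \<le> F c" using F0 by (simp add: S_def)
    qed simp
  next
    case False
    obtain c0 where c0: "c0 \<in> Sph" "\<forall>c\<in>Sph. F c0 \<le> F c"
      using continuous_attains_inf[OF cpt False continuous_on_subset[OF Fc]] by auto
    have bpos: "F c0 > 0" using c0(1) Fp unfolding Sph_def S_def by auto
    show ?thesis
    proof (intro exI[of _ "F c0"] conjI ballI bpos)
      fix c assume c: "c \<in> K"
      show "F c0 * (\<Sum>i\<in>A. \<bar>c i\<bar>) \<le> F c"
      proof (cases "S c > 0")
        case True
        define c' where "c' = (\<lambda>i. (1 / S c) * c i)"
        have k1: "c' \<in> K" unfolding c'_def by (rule Kh[OF c]) (use True in simp)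
        have k2: "S c' = 1" unfolding c'_def using Sscale[of "1 / S c" c] True by simp
        have "c' \<in> Sph" unfolding Sph_def using k1 k2 by blast
        hence le: "F c0 \<le> F c'" using c0 by auto
        have "c = (\<lambda>i. S c * c' i)" unfolding c'_def using True by auto
        hence "F c = S c * F c'" using Fh[OF True, of c'] by simp
        thus ?thesis using le True unfolding S_def by (simp add: mult.commute mult_left_mono)
      next
        case False
        hence "S c = 0" unfolding S_def by (meson sum_nonneg abs_ge_zero antisym not_less)
        thus ?thesis using F0 unfolding S_def by simp
      qed
    qed
  qed
qed

context sp begin

definition "Pc (c :: nat \<times> nat \<Rightarrow> real) k = (\<Sum>l<p. monom (c (k, l)) l)"

lemma poly_Pc: "poly (Pc c k) x = (\<Sum>l<p. c (k, l) * x ^ l)"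
  unfolding Pc_def by (simp add: poly_sum poly_monom)

lemma coeff_Pc: "coeff (Pc c k) n = (if n < p then c (k, n) else 0)"
  unfolding Pc_def by (simp add: coeff_sum)

lemma degree_Pc: "degree (Pc c k) \<le> p - 1"
proof (rule degree_le)
  show "\<forall>i>p - 1. coeff (Pc c k) i = 0" using p2 by (auto simp: coeff_Pc)
qed

lemma Pc_eqI:
  assumes "degree Q \<le> p - 1" "\<forall>l<p. c (k, l) = coeff Q l"
  shows "Pc c k = Q"
proof (rule poly_eqI)
  fix n show "coeff (Pc c k) n = coeff Q n"
  proof (cases "n < p")
    case True thus ?thesis using assms by (simp add: coeff_Pc)
  next
    case False
    hence "n > degree Q" using assms(1) p2 by linarith
    thus ?thesis using False by (simp add: coeff_Pc coeff_eq_0)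
  qed
qed

lemma Pc_alt: "Pc c k = (\<Sum>l<p. smult (c (k, l)) (monom 1 l))"
  unfolding Pc_def by (simp add: smult_monom)

lemma poly_deriv_Pc:
  "poly ((pderiv ^^ j) (Pc c k)) x = (\<Sum>l<p. c (k, l) * poly ((pderiv ^^ j) (monom 1 l)) x)"
  unfolding Pc_alt by (simp add: higher_pderiv_sum pderiv_iter_smult poly_sum)

definition "Kset = {c :: nat \<times> nat \<Rightarrow> real. (\<forall>k l. M \<le> k \<or> p \<le> l \<longrightarrow> c (k, l) = 0) \<and>
   (\<forall>k j. Suc k < M \<and> j < p - 1 \<longrightarrow>
      poly ((pderiv ^^ j) (Pc c k)) (yk (Suc k)) = poly ((pderiv ^^ j) (Pc c (Suc k))) (yk (Suc k)))}"

lemma coord_cont: "continuous_on UNIV (\<lambda>c :: nat \<times> nat \<Rightarrow> real. c i)"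
  by simp

lemma cont_poly_deriv_Pc: "continuous_on UNIV (\<lambda>c. poly ((pderiv ^^ j) (Pc c k)) x)"
  unfolding poly_deriv_Pc by (intro continuous_intros coord_cont)

lemma open_const: "open {x :: 'a :: topological_space. Q}"
  by (cases Q) auto

lemma Kset_closed: "closed Kset"
proof -
  have c1: "closed {c :: nat \<times> nat \<Rightarrow> real. \<forall>k l. M \<le> k \<or> p \<le> l \<longrightarrow> c (k, l) = 0}"
    by (intro closed_Collect_all closed_Collect_imp open_const closed_Collect_eq coord_cont continuous_on_const)
  have c2: "closed {c :: nat \<times> nat \<Rightarrow> real. \<forall>k j. Suc k < M \<and> j < p - 1 \<longrightarrow>
      poly ((pderiv ^^ j) (Pc c k)) (yk (Suc k)) = poly ((pderiv ^^ j) (Pc c (Suc k))) (yk (Suc k))}"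
    by (intro closed_Collect_all closed_Collect_imp open_const closed_Collect_eq cont_poly_deriv_Pc)
  have "Kset = {c. \<forall>k l. M \<le> k \<or> p \<le> l \<longrightarrow> c (k, l) = 0} \<inter> {c. \<forall>k j. Suc k < M \<and> j < p - 1 \<longrightarrow>
      poly ((pderiv ^^ j) (Pc c k)) (yk (Suc k)) = poly ((pderiv ^^ j) (Pc c (Suc k))) (yk (Suc k))}"
    unfolding Kset_def by auto
  thus ?thesis using c1 c2 by auto
qed

lemma Kset_scale: assumes c: "c \<in> Kset" shows "(\<lambda>i. t * c i) \<in> Kset"
proof -
  have e: "poly ((pderiv ^^ j) (Pc (\<lambda>i. t * c i) k)) x = t * poly ((pderiv ^^ j) (Pc c k)) x" for j k x
    unfolding poly_deriv_Pc by (simp add: sum_distrib_left algebra_simps)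
  show ?thesis using c unfolding Kset_def by (simp add: e)
qed

definition "qf c x = poly (Pc c (pc x)) x"

lemma qf_piece:
  assumes c: "c \<in> Kset" and k: "k < M" and x: "x \<in> {yk k..yk (Suc k)}"
  shows "qf c x = poly (Pc c k) x"
proof -
  have p1: "0 < p - 1" using p2 by simp
  have all: "\<forall>k j. Suc k < M \<and> j < p - 1 \<longrightarrow>
      poly ((pderiv ^^ j) (Pc c k)) (yk (Suc k)) = poly ((pderiv ^^ j) (Pc c (Suc k))) (yk (Suc k))"
    using c unfolding Kset_def by blast
  have sm: "poly (Pc c k) (yk (Suc k)) = poly (Pc c (Suc k)) (yk (Suc k))" if "Suc k < M"
    using all[rule_format, of k 0] that p1 by simp
  show ?thesis using pc_piece[OF k x] sm unfolding qf_def by auto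
qed

lemma qf_qsp: assumes c: "c \<in> Kset" shows "qsp a b N p L (qf c) (Pc c)"
  unfolding qsp_def qsp_axioms_def
proof (intro conjI)
  show "sp a b N p L" by (rule sp_axioms)
  show "\<forall>k<M. degree (Pc c k) \<le> p - 1" using degree_Pc by simp
  show "\<forall>k<M. \<forall>x\<in>{yk k..yk (Suc k)}. qf c x = poly (Pc c k) x" using qf_piece[OF c] by simp
  show "\<forall>k. Suc k < M \<longrightarrow> (\<forall>j<p - 1. poly ((pderiv ^^ j) (Pc c k)) (yk (Suc k)) =
                   poly ((pderiv ^^ j) (Pc c (Suc k))) (yk (Suc k)))" using c unfolding Kset_def by blast
qed

end

context qsp begin

lemma inner_coeffs:
  assumes v: "continuous_on {a..b} v" and cP: "\<forall>k<M. Pc c k = P k"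
  shows "l2_inner a b v q = (\<Sum>k<M. \<Sum>l<p. c (k, l) * integral {yk k..yk (Suc k)} (\<lambda>x. v x * x ^ l))"
proof -
  have vq: "continuous_on {a..b} (\<lambda>x. v x * q x)" using v q_cont by (intro continuous_intros)
  have "l2_inner a b v q = integral {a..a + real M * Hc} (\<lambda>x. v x * q x)" unfolding l2_inner_def M_Hc ..
  also have "\<dots> = (\<Sum>k<M. integral {mesh_pt a Hc k..mesh_pt a Hc (Suc k)} (\<lambda>x. v x * q x))"
    by (rule integral_split_mesh[OF Hc_pos]) (use vq M_Hc in \<open>auto intro: integrable_continuous_interval\<close>)
  also have "\<dots> = (\<Sum>k<M. \<Sum>l<p. c (k, l) * integral {yk k..yk (Suc k)} (\<lambda>x. v x * x ^ l))"
  proof (rule sum.cong[OF refl])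
    fix k assume k: "k \<in> {..<M}"
    have sub: "{yk k..yk (Suc k)} \<subseteq> {a..b}" using yk_range[of k] yk_range[of "Suc k"] k by auto
    have vk: "continuous_on {yk k..yk (Suc k)} v" using v sub by (rule continuous_on_subset)
    have "integral {yk k..yk (Suc k)} (\<lambda>x. v x * q x) = integral {yk k..yk (Suc k)} (\<lambda>x. \<Sum>l<p. c (k, l) * (v x * x ^ l))"
    proof (rule integral_cong)
      fix x assume x: "x \<in> {yk k..yk (Suc k)}"
      have "q x = poly (Pc c k) x" using Pval cP k x by auto
      thus "v x * q x = (\<Sum>l<p. c (k, l) * (v x * x ^ l))" by (simp add: poly_Pc sum_distrib_left algebra_simps)
    qed
    also have "\<dots> = (\<Sum>l<p. integral {yk k..yk (Suc k)} (\<lambda>x. c (k, l) * (v x * x ^ l)))"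
      by (rule integral_sum) (auto intro!: integrable_continuous_interval continuous_intros vk)
    also have "\<dots> = (\<Sum>l<p. c (k, l) * integral {yk k..yk (Suc k)} (\<lambda>x. v x * x ^ l))" by simp
    finally show "integral {mesh_pt a Hc k..mesh_pt a Hc (Suc k)} (\<lambda>x. v x * q x) = (\<Sum>l<p. c (k, l) * integral {yk k..yk (Suc k)} (\<lambda>x. v x * x ^ l))"
      unfolding yk_def .
  qed
  finally show ?thesis .
qed

end

context sp begin

lemma V_cont: "f \<in> V_h a b N p \<Longrightarrow> continuous_on {a..b} f"
  using spline_continuous[OF h_pos N1, of f a p] N_h unfolding V_h_def h_eq by simp

lemma Q_iff: "Q_L a b N p L = spline_space a Hc M (p - 1)"
  unfolding Q_L_def Hc_def M_def ..

definition "NT = N + p"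
definition "T j = (if j \<le> N then vt j else wt (j - N))"

lemma T_V: "j < NT \<Longrightarrow> T j \<in> V_h a b N p"
  unfolding T_def NT_def using vt_V wt_V p2 by auto

lemma T_cont: "j < NT \<Longrightarrow> continuous_on {a..b} (T j)"
  using T_V V_cont by blast

definition "bet j k l = integral {yk k..yk (Suc k)} (\<lambda>x. T j x * x ^ l)"
definition "Lf j c = (\<Sum>k<M. \<Sum>l<p. c (k, l) * bet j k l)"
definition "Ff c = (\<Sum>j<NT. \<bar>Lf j c\<bar>)"
definition "Aset = {..<M} \<times> {..<p}"

lemma Ff_cont: "continuous_on UNIV Ff"
  unfolding Ff_def Lf_def by (intro continuous_intros coord_cont)

lemma Ff_hom: "t > 0 \<Longrightarrow> Ff (\<lambda>i. t * c i) = t * Ff c"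
proof -
  assume t: "t > 0"
  have "Lf j (\<lambda>i. t * c i) = t * Lf j c" for j
    unfolding Lf_def by (simp add: sum_distrib_left algebra_simps)
  thus ?thesis unfolding Ff_def using t by (simp add: abs_mult sum_distrib_left)
qed

lemma S_split: "(\<Sum>i\<in>Aset. \<bar>c i\<bar>) = (\<Sum>k<M. \<Sum>l<p. \<bar>c (k, l)\<bar>)"
  unfolding Aset_def by (simp add: sum.cartesian_product)

lemma inner_T:
  assumes c: "c \<in> Kset" and Q: "qsp a b N p L q P" and cP: "\<forall>k<M. Pc c k = P k" and j: "j < NT"
  shows "l2_inner a b (T j) q = Lf j c"
proof -
  interpret Q: qsp a b N p L q P by (rule Q)
  show ?thesis using Q.inner_coeffs[OF T_cont[OF j] cP] unfolding Lf_def bet_def by simp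
qed

lemma Ff_pos:
  assumes c: "c \<in> Kset" and S: "(\<Sum>i\<in>Aset. \<bar>c i\<bar>) > 0"
  shows "Ff c > 0"
proof (rule ccontr)
  assume "\<not> Ff c > 0"
  moreover have "Ff c \<ge> 0" unfolding Ff_def by (simp add: sum_nonneg)
  ultimately have "Ff c = 0" by simp
  hence L0: "\<forall>j<NT. Lf j c = 0" unfolding Ff_def by (subst (asm) sum_nonneg_eq_0_iff) auto
  interpret Q: qsp a b N p L "qf c" "Pc c" by (rule qf_qsp[OF c])
  have inn: "l2_inner a b (T j) (qf c) = 0" if "j < NT" for j
    using inner_T[OF c qf_qsp[OF c] _ that] L0 that by simp
  have o1: "\<forall>i\<le>N. l2_inner a b (vt i) (qf c) = 0"
  proof (intro allI impI)
    fix i assume i: "i \<le> N"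
    hence "i < NT" "T i = vt i" unfolding NT_def T_def using p2 by auto
    thus "l2_inner a b (vt i) (qf c) = 0" using inn by metis
  qed
  have o2: "\<forall>k. 1 \<le> k \<and> k < p \<longrightarrow> l2_inner a b (wt k) (qf c) = 0"
  proof (intro allI impI)
    fix k assume k: "1 \<le> k \<and> k < p"
    hence "N + k < NT" "T (N + k) = wt k" unfolding NT_def T_def by auto
    thus "l2_inner a b (wt k) (qf c) = 0" using inn by metis
  qed
  have P0: "\<forall>k<M. Pc c k = 0" by (rule Q.inj_main[OF o1 o2])
  have "\<forall>k<M. \<forall>l<p. c (k, l) = 0"
  proof (intro allI impI)
    fix k l assume k: "k < M" and l: "l < p"
    have "coeff (Pc c k) l = 0" using P0 k by simp
    thus "c (k, l) = 0" using l by (simp add: coeff_Pc)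
  qed
  hence "(\<Sum>i\<in>Aset. \<bar>c i\<bar>) = 0" unfolding S_split by simp
  thus False using S by simp
qed

lemma beta_ex: "\<exists>\<beta>>0. \<forall>c\<in>Kset. Ff c \<ge> \<beta> * (\<Sum>i\<in>Aset. \<bar>c i\<bar>)"
proof (rule compact_lower_bound[OF _ Kset_closed Ff_cont])
  show "finite Aset" unfolding Aset_def by simp
  show "\<And>c. 0 \<le> Ff c" unfolding Ff_def by (simp add: sum_nonneg)
  show "\<And>c t. 0 < t \<Longrightarrow> Ff (\<lambda>i. t * c i) = t * Ff c" by (rule Ff_hom)
  show "\<And>c t. c \<in> Kset \<Longrightarrow> 0 < t \<Longrightarrow> (\<lambda>i. t * c i) \<in> Kset" by (rule Kset_scale)
  show "\<And>c i. c \<in> Kset \<Longrightarrow> i \<notin> Aset \<Longrightarrow> c i = 0"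
  proof -
    fix c i assume c: "c \<in> Kset" and i: "i \<notin> Aset"
    obtain k l where kl: "i = (k, l)" by (cases i)
    hence "M \<le> k \<or> p \<le> l" using i unfolding Aset_def by auto
    thus "c i = 0" using c kl unfolding Kset_def by auto
  qed
  show "\<And>c. c \<in> Kset \<Longrightarrow> 0 < (\<Sum>i\<in>Aset. \<bar>c i\<bar>) \<Longrightarrow> 0 < Ff c" by (rule Ff_pos)
qed

end

lemma l2_inner_nonneg_self: "l2_inner a b f f \<ge> 0"
proof (cases "(\<lambda>x. f x * f x) integrable_on {a..b}")
  case True thus ?thesis unfolding l2_inner_def by (rule integral_nonneg) auto
next
  case False thus ?thesis unfolding l2_inner_def by (simp add: not_integrable_integral)
qed

lemma l2_norm_nonneg: "l2_norm a b f \<ge> 0"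
  unfolding l2_norm_def using l2_inner_nonneg_self by simp

lemma l2_norm_uminus: "l2_norm a b (\<lambda>x. - f x) = l2_norm a b f"
  unfolding l2_norm_def l2_inner_def by simp

lemma l2_inner_uminus: "l2_inner a b (\<lambda>x. - f x) g = - l2_inner a b f g"
  unfolding l2_inner_def by (simp add: integral_neg)

lemma CS_l2:
  assumes "continuous_on {a..b} f" "continuous_on {a..b} g"
  shows "\<bar>l2_inner a b f g\<bar> \<le> l2_norm a b f * l2_norm a b g"
  using cauchy_schwarz_integral[OF assms] unfolding l2_inner_def l2_norm_def .

lemma ratio_le1:
  assumes "continuous_on {a..b} f" "continuous_on {a..b} g"
  shows "l2_inner a b f g / (l2_norm a b f * l2_norm a b g) \<le> 1"
proof -
  have cs: "l2_inner a b f g \<le> l2_norm a b f * l2_norm a b g" using CS_l2[OF assms] by simp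
  have "l2_norm a b f * l2_norm a b g \<ge> 0" using l2_norm_nonneg by simp
  thus ?thesis using cs by (cases "l2_norm a b f * l2_norm a b g = 0") (auto simp: divide_le_eq)
qed

context sp begin

lemma Q_cont: "q \<in> Q_L a b N p L \<Longrightarrow> continuous_on {a..b} q"
  using spline_continuous[OF Hc_pos M1, of q a "p - 1"] M_Hc unfolding Q_iff by simp

lemma ratio_bdd:
  assumes q: "q \<in> Q_L a b N p L"
  shows "bdd_above ((\<lambda>v. l2_inner a b v q / (l2_norm a b v * l2_norm a b q)) ` {v \<in> V_h a b N p. nonzero_on a b v})"
  by (rule bdd_aboveI[of _ 1]) (use ratio_le1 V_cont Q_cont[OF q] in auto)

lemma q_bound:
  assumes beta: "\<beta>0 > 0" "\<forall>c\<in>Kset. Ff c \<ge> \<beta>0 * (\<Sum>i\<in>Aset. \<bar>c i\<bar>)"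
    and q: "q \<in> Q_L a b N p L" and nz: "nonzero_on a b q"
  shows "\<exists>v\<in>{v \<in> V_h a b N p. nonzero_on a b v}.
     l2_inner a b v q / (l2_norm a b v * l2_norm a b q) \<ge>
       \<beta>0 / (real NT * (1 + (\<Sum>j<NT. l2_norm a b (T j))) * (sqrt (b - a) * (1 + \<bar>a\<bar> + \<bar>b\<bar>) ^ p))"
proof -
  define BB where "BB = (1 + \<bar>a\<bar> + \<bar>b\<bar>) ^ p"
  define Bq where "Bq = sqrt (b - a) * BB"
  define Vs where "Vs = (\<Sum>j<NT. l2_norm a b (T j))"
  define \<alpha> where "\<alpha> = \<beta>0 / (real NT * (1 + Vs) * Bq)"
  have BB1: "BB \<ge> 1" unfolding BB_def by (intro one_le_power) auto
  have Bqp: "Bq > 0" unfolding Bq_def using BB1 ab by simp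
  have Vs0: "Vs \<ge> 0" unfolding Vs_def by (intro sum_nonneg l2_norm_nonneg)
  have NT1: "real NT \<ge> 1" unfolding NT_def using N1 by simp
  obtain P where P1: "\<forall>i<M. degree (P i) \<le> p - 1 \<and> (\<forall>x \<in> {mesh_pt a Hc i .. mesh_pt a Hc (Suc i)}. q x = poly (P i) x)"
    and P2: "\<forall>i. Suc i < M \<longrightarrow> (\<forall>k<p - 1. poly ((pderiv ^^ k) (P i)) (mesh_pt a Hc (Suc i)) =
                    poly ((pderiv ^^ k) (P (Suc i))) (mesh_pt a Hc (Suc i)))"
    using q unfolding Q_iff spline_space_def by blast
  have Qq: "qsp a b N p L q P" unfolding qsp_def qsp_axioms_def
    using sp_axioms P1 P2 unfolding yk_def by blast
  interpret Q: qsp a b N p L q P by (rule Qq)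
  define c where "c = (\<lambda>(k, l). if k < M \<and> l < p then coeff (P k) l else (0::real))"
  have cP: "\<forall>k<M. Pc c k = P k"
  proof (intro allI impI)
    fix k assume k: "k < M"
    show "Pc c k = P k" by (rule Pc_eqI) (use Q.Pdeg k in \<open>auto simp: c_def\<close>)
  qed
  have cK: "c \<in> Kset" unfolding Kset_def
  proof (intro CollectI conjI allI impI)
    fix k l assume "M \<le> k \<or> p \<le> l" thus "c (k, l) = 0" unfolding c_def by auto
  next
    fix k j assume kj: "Suc k < M \<and> j < p - 1"
    thus "poly ((pderiv ^^ j) (Pc c k)) (yk (Suc k)) = poly ((pderiv ^^ j) (Pc c (Suc k))) (yk (Suc k))"
      using cP Q.Psm by auto
  qed
  define S where "S = (\<Sum>i\<in>Aset. \<bar>c i\<bar>)"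
  have S0: "S \<ge> 0" unfolding S_def by (simp add: sum_nonneg)
  have Spos: "S > 0"
  proof (rule ccontr)
    assume "\<not> S > 0"
    hence "S = 0" using S0 by simp
    hence "\<forall>k\<in>{..<M}. \<forall>l\<in>{..<p}. \<bar>c (k, l)\<bar> = 0" unfolding S_def S_split
      by (subst (asm) sum_nonneg_eq_0_iff) (auto simp: sum_nonneg_eq_0_iff)
    hence P0: "\<forall>k<M. P k = 0"
    proof (intro allI impI)
      fix k assume z: "\<forall>k\<in>{..<M}. \<forall>l\<in>{..<p}. \<bar>c (k, l)\<bar> = 0" and k: "k < M"
      have "Pc c k = 0" by (rule poly_eqI) (use z k in \<open>auto simp: coeff_Pc\<close>)
      thus "P k = 0" using cP k by simp
    qed
    have "\<forall>x\<in>{a..b}. q x = 0"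
    proof
      fix x assume x: "x \<in> {a..b}"
      thus "q x = 0" using pc_in[OF x] Q.Pval P0 by auto
    qed
    thus False using nz unfolding nonzero_on_def by auto
  qed
  have Fc: "Ff c = (\<Sum>j<NT. \<bar>l2_inner a b (T j) q\<bar>)"
    unfolding Ff_def using inner_T[OF cK Qq cP] by simp
  have Fge: "(\<Sum>j<NT. \<bar>l2_inner a b (T j) q\<bar>) \<ge> \<beta>0 * S" using beta(2) cK Fc unfolding S_def by metis
  obtain j where j: "j < NT" "\<bar>l2_inner a b (T j) q\<bar> \<ge> \<beta>0 * S / real NT"
  proof (rule ccontr)
    assume "\<not> thesis"
    hence lt: "\<forall>j<NT. \<bar>l2_inner a b (T j) q\<bar> < \<beta>0 * S / real NT" using that by (meson not_le)
    have ne: "{..<NT} \<noteq> {}" unfolding NT_def using N1 by auto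
    have "(\<Sum>j<NT. \<bar>l2_inner a b (T j) q\<bar>) < (\<Sum>j<NT. \<beta>0 * S / real NT)"
      by (rule sum_strict_mono[OF _ ne]) (use lt in auto)
    also have "\<dots> = \<beta>0 * S" using NT1 by simp
    finally show False using Fge by simp
  qed
  have qb: "\<bar>q x\<bar> \<le> BB * S" if x: "x \<in> {a..b}" for x
  proof -
    define k where "k = pc x"
    have k: "k < M" and xk: "x \<in> {yk k..yk (Suc k)}" using pc_in[OF x] unfolding k_def by auto
    have "q x = poly (Pc c k) x" using Q.Pval k xk cP by auto
    also have "\<dots> = (\<Sum>l<p. c (k, l) * x ^ l)" by (rule poly_Pc)
    finally have "\<bar>q x\<bar> \<le> (\<Sum>l<p. \<bar>c (k, l)\<bar> * \<bar>x\<bar> ^ l)"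
      by (simp add: abs_mult power_abs) (rule sum_abs[THEN order.trans], simp add: abs_mult power_abs)
    also have "\<dots> \<le> (\<Sum>l<p. \<bar>c (k, l)\<bar> * BB)"
    proof (rule sum_mono)
      fix l assume l: "l \<in> {..<p}"
      have "\<bar>x\<bar> \<le> 1 + \<bar>a\<bar> + \<bar>b\<bar>" using x by auto
      hence "\<bar>x\<bar> ^ l \<le> (1 + \<bar>a\<bar> + \<bar>b\<bar>) ^ l" by (rule power_mono) simp
      also have "\<dots> \<le> BB" unfolding BB_def using l by (intro power_increasing) auto
      finally show "\<bar>c (k, l)\<bar> * \<bar>x\<bar> ^ l \<le> \<bar>c (k, l)\<bar> * BB" by (simp add: mult_left_mono)
    qed
    also have "\<dots> = BB * (\<Sum>l<p. \<bar>c (k, l)\<bar>)" by (simp add: sum_distrib_left mult.commute)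
    also have "(\<Sum>l<p. \<bar>c (k, l)\<bar>) \<le> (\<Sum>k'<M. \<Sum>l<p. \<bar>c (k', l)\<bar>)"
      by (rule member_le_sum[of k "{..<M}" "\<lambda>k'. \<Sum>l<p. \<bar>c (k', l)\<bar>"]) (use k in \<open>auto intro: sum_nonneg\<close>)
    hence "BB * (\<Sum>l<p. \<bar>c (k, l)\<bar>) \<le> BB * S" unfolding S_def S_split using BB1 by simp
    finally show ?thesis .
  qed
  have nq: "l2_norm a b q \<le> Bq * S"
  proof -
    have qc: "continuous_on {a..b} q" by (rule Q_cont[OF q])
    have "l2_inner a b q q \<le> integral {a..b} (\<lambda>x. (BB * S)^2)" unfolding l2_inner_def
    proof (rule integral_le)
      show "(\<lambda>x. q x * q x) integrable_on {a..b}" by (intro integrable_continuous_interval continuous_intros qc)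
      show "(\<lambda>x. (BB * S)^2) integrable_on {a..b}" by (rule integrable_continuous_interval) (rule continuous_on_const)
      fix x assume x: "x \<in> {a..b}"
      have "\<bar>q x\<bar> * \<bar>q x\<bar> \<le> (BB * S) * (BB * S)" using qb[OF x] by (intro mult_mono) auto
      thus "q x * q x \<le> (BB * S)^2" by (simp add: power2_eq_square abs_mult[symmetric])
    qed
    also have "\<dots> = (b - a) * (BB * S)^2" using ab by simp
    finally have "l2_norm a b q \<le> sqrt ((b - a) * (BB * S)^2)" unfolding l2_norm_def by simp
    also have "\<dots> = Bq * S" unfolding Bq_def using BB1 S0 ab by (simp add: real_sqrt_mult)
    finally show ?thesis .
  qed
  define u where "u = (if l2_inner a b (T j) q \<ge> 0 then T j else (\<lambda>x. - T j x))"
  have uV: "u \<in> V_h a b N p" unfolding u_def using T_V[OF j(1)] V_uminus by auto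
  have uc: "continuous_on {a..b} u" by (rule V_cont[OF uV])
  have ui: "l2_inner a b u q = \<bar>l2_inner a b (T j) q\<bar>" unfolding u_def by (auto simp: l2_inner_uminus)
  have un: "l2_norm a b u = l2_norm a b (T j)" unfolding u_def by (auto simp: l2_norm_uminus)
  have unV: "l2_norm a b u \<le> 1 + Vs"
  proof -
    have "l2_norm a b (T j) \<le> Vs" unfolding Vs_def
      by (rule member_le_sum[of j "{..<NT}" "\<lambda>j. l2_norm a b (T j)"]) (use j(1) l2_norm_nonneg in auto)
    thus ?thesis using un by simp
  qed
  have Ipos: "l2_inner a b u q \<ge> \<beta>0 * S / real NT" using ui j(2) by simp
  have Ipos': "\<beta>0 * S / real NT > 0" using beta(1) Spos NT1 by simp
  have cs: "l2_inner a b u q \<le> l2_norm a b u * l2_norm a b q"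
    using CS_l2[OF uc Q_cont[OF q]] by simp
  have den: "l2_norm a b u * l2_norm a b q > 0" using cs Ipos Ipos' by simp
  have unz: "nonzero_on a b u"
  proof (rule ccontr)
    assume "\<not> nonzero_on a b u"
    hence "\<forall>x\<in>{a..b}. u x = 0" unfolding nonzero_on_def by auto
    hence "l2_inner a b u q = integral {a..b} (\<lambda>x. 0)" unfolding l2_inner_def by (intro integral_cong) auto
    thus False using Ipos Ipos' by simp
  qed
  have "\<alpha> * (l2_norm a b u * l2_norm a b q) \<le> \<alpha> * ((1 + Vs) * (Bq * S))"
  proof (rule mult_left_mono)
    show "l2_norm a b u * l2_norm a b q \<le> (1 + Vs) * (Bq * S)"
      by (rule mult_mono[OF unV nq]) (use Vs0 l2_norm_nonneg in auto)
    show "0 \<le> \<alpha>" unfolding \<alpha>_def using beta(1) NT1 Vs0 Bqp by (simp add: zero_le_divide_iff)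
  qed
  also have "\<alpha> * ((1 + Vs) * (Bq * S)) = \<beta>0 * S / real NT"
  proof -
    have n1: "real NT \<noteq> 0" "1 + Vs \<noteq> 0" "Bq \<noteq> 0" using NT1 Vs0 Bqp by auto
    have ha: "\<alpha> * (real NT * (1 + Vs) * Bq) = \<beta>0" unfolding \<alpha>_def using n1 by simp
    have "\<alpha> * ((1 + Vs) * (Bq * S)) * real NT = (\<alpha> * (real NT * (1 + Vs) * Bq)) * S" by (simp add: algebra_simps)
    also have "\<dots> = \<beta>0 * S" using ha by simp
    finally show ?thesis using n1 by (simp add: eq_divide_eq)
  qed
  also have "\<dots> \<le> l2_inner a b u q" by (rule Ipos)
  finally have "\<alpha> \<le> l2_inner a b u q / (l2_norm a b u * l2_norm a b q)"
    using den by (simp add: pos_le_divide_eq)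
  thus ?thesis using uV unz unfolding \<alpha>_def Vs_def Bq_def BB_def by blast
qed

end

theorem mainTheorem5:
  fixes a b :: real and N p L :: nat
  assumes "a < b" and "N \<ge> 1" and "p \<ge> 2" and "L \<ge> 1" and "2 ^ L dvd N"
  shows "\<exists>\<alpha>>0. inf_sup_const (V_h a b N p) (Q_L a b N p L) a b \<ge> \<alpha>"
proof -
  interpret sp a b N p L by unfold_locales (use assms in auto)
  obtain \<beta>0 where beta: "\<beta>0 > 0" "\<forall>c\<in>Kset. Ff c \<ge> \<beta>0 * (\<Sum>i\<in>Aset. \<bar>c i\<bar>)"
    using beta_ex by blast
  define \<alpha> where "\<alpha> = \<beta>0 / (real NT * (1 + (\<Sum>j<NT. l2_norm a b (T j))) * (sqrt (b - a) * (1 + \<bar>a\<bar> + \<bar>b\<bar>) ^ p))"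
  have Vs0: "(\<Sum>j<NT. l2_norm a b (T j)) \<ge> 0" by (intro sum_nonneg l2_norm_nonneg)
  have NT1: "real NT \<ge> 1" unfolding NT_def using assms by simp
  have BB: "(1 + \<bar>a\<bar> + \<bar>b\<bar>) ^ p \<ge> (1::real)" by (intro one_le_power) auto
  have apos: "\<alpha> > 0" unfolding \<alpha>_def using beta(1) Vs0 NT1 BB assms(1)
    by (intro divide_pos_pos mult_pos_pos) auto
  define R where "R q = Sup ((\<lambda>v. l2_inner a b v q / (l2_norm a b v * l2_norm a b q)) ` {v \<in> V_h a b N p. nonzero_on a b v})" for q
  have "\<alpha> \<le> Inf (R ` {q \<in> Q_L a b N p L. nonzero_on a b q})"
  proof (rule cInf_greatest)
    have "(\<lambda>_. 1) \<in> Q_L a b N p L" unfolding Q_iff spline_space_def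
      by (rule CollectI, rule exI[of _ "\<lambda>_. 1"]) auto
    moreover have "nonzero_on a b (\<lambda>_. 1)" unfolding nonzero_on_def using assms(1) by auto
    ultimately show "R ` {q \<in> Q_L a b N p L. nonzero_on a b q} \<noteq> {}" by blast
  next
    fix r assume "r \<in> R ` {q \<in> Q_L a b N p L. nonzero_on a b q}"
    then obtain q where q: "q \<in> Q_L a b N p L" "nonzero_on a b q" and r: "r = R q" by blast
    obtain v where v: "v \<in> {v \<in> V_h a b N p. nonzero_on a b v}"
      and le: "\<alpha> \<le> l2_inner a b v q / (l2_norm a b v * l2_norm a b q)"
      using q_bound[OF beta q] unfolding \<alpha>_def by blast
    have "l2_inner a b v q / (l2_norm a b v * l2_norm a b q) \<le> R q"
      unfolding R_def by (rule cSup_upper[OF imageI[OF v] ratio_bdd[OF q(1)]])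
    thus "\<alpha> \<le> r" using le r by simp
  qed
  thus ?thesis unfolding inf_sup_const_def R_def using apos by blast
qed

end
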